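(* Let $N\in\mathbb{N}$ and let $\Xi_N=(\xi_k)_{k=1}^N$ be a biorthogonal ensemble on $(\mathbb{R},\mu_N)$ with correlation kernel $K_N(x,y)=\sum_{k=0}^{N-1}P^N_k(x)Q^N_k(y)$, where the functions $(P^N_k)_{k\ge0}$ satisfy the recurrence relation $x\,(P^N_0(x),P^N_1(x),\dots)^T=\mathbf{J}\,(P^N_0(x),P^N_1(x),\dots)^T$ for all $x\in\mathbb{R}$, with $\mathbf{J}=(\mathbf{J}_{ij})_{i,j\ge0}$ a band matrix: there is $W>0$ with $\mathbf{J}_{ij}=0$ whenever $|i-j|\ge W$. Let $F\in\mathbb{R}[x]$ be a polynomial and $\mathbf{M}=F(\mathbf{J})$. Then for every $n\ge2$ the $n$-th cumulant of the linear statistic $\Xi_N(F)=\sum_{k=1}^N F(\xi_k)$ is $$\operatorname{C}^n_N[F]=\sum_{\mathbf{n}\in\Lambda_n}\mho(\mathbf{n})\sum_{\pi\in\Gamma^{\mathbf{n}}_N(\mathbf{M})}\prod_{i=1}^n\mathbf{M}_{\pi(i)\pi(i-1)}.$$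
   Context: A biorthogonal family $\{P^N_k,Q^N_k\}_{k\ge0}$ on $(\mathbb{R},\mu_N)$ ($\mu_N$ a Borel measure) satisfies $P^N_kQ^N_n\in L^1(\mu_N)$ and $\int P^N_kQ^N_n\,d\mu_N=\delta_{kn}$; a biorthogonal ensemble is the determinantal point process on $(\mathbb{R},\mu_N)$ whose correlation functions with respect to $\mu_N$ are $\rho_k(x_1,\dots,x_k)=\det[K_N(x_i,x_j)]_{i,j\le k}$. The cumulants $\operatorname{C}^n_N[F]$ are defined by the formal power series $\log\mathbb{E}[e^{\lambda\Xi_N(F)}]\sim\sum_{n\ge1}\operatorname{C}^n_N[F]\lambda^n/n!$. For $n\ge2$, $\Lambda_n$ is the set of tuples $\mathbf{n}=(n_1,\dots,n_\ell)$ with $1\le\ell\le n-1$ and integers $0<n_1<\dots<n_\ell<n$; setting $k_1=n_1$, $k_i=n_i-n_{i-1}$ ($2\le i\le\ell$), $k_{\ell+1}=n-n_\ell$, define $\mho(\mathbf{n})=\frac{(-1)^{\ell+1}}{\ell+1}\frac{n!}{k_1!\cdots k_{\ell+1}!}$. For a matrix $\mathbf{M}$ indexed by $\mathbb{N}_0$ and $o\in\mathbb{Z}$, $\Gamma^{\mathbf{n}}_o(\mathbf{M})$ is the set of sequences $\pi=(\pi(0),\pi(1),\dots,\pi(n))$ of indices (paths on the directed graph with an edge $j\to i$ iff $\mathbf{M}_{ij}\neq0$) such that $\pi(0)=\pi(n)<o$ and $\max\{\pi(n_1),\dots,\pi(n_\ell)\}\ge o$. *)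

theory Defs
  imports "HOL-Probability.Probability"
    "HOL-Computational_Algebra.Formal_Power_Series"
    "HOL-Computational_Algebra.Polynomial"
    "Jordan_Normal_Form.Determinant"
begin

definition biorth_kernel :: "(nat \<Rightarrow> real \<Rightarrow> real) \<Rightarrow> (nat \<Rightarrow> real \<Rightarrow> real) \<Rightarrow> nat \<Rightarrow> real \<Rightarrow> real \<Rightarrow> real"
  where "biorth_kernel P Q N x y = (\<Sum>k<N. P k x * Q k y)"

(* Infinite matrices indexed by N_0 x N_0; product (used for band matrices,
   where the sums have finite support) *)
definition inf_mat_mult :: "(nat \<Rightarrow> nat \<Rightarrow> real) \<Rightarrow> (nat \<Rightarrow> nat \<Rightarrow> real) \<Rightarrow> nat \<Rightarrow> nat \<Rightarrow> real"
  where "inf_mat_mult A B i j = infsum (\<lambda>k. A i k * B k j) UNIV"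

fun inf_mat_pow :: "(nat \<Rightarrow> nat \<Rightarrow> real) \<Rightarrow> nat \<Rightarrow> nat \<Rightarrow> nat \<Rightarrow> real" where
  "inf_mat_pow A 0 = (\<lambda>i j. if i = j then 1 else 0)"
| "inf_mat_pow A (Suc k) = inf_mat_mult (inf_mat_pow A k) A"

definition poly_inf_mat :: "real poly \<Rightarrow> (nat \<Rightarrow> nat \<Rightarrow> real) \<Rightarrow> nat \<Rightarrow> nat \<Rightarrow> real"
  where "poly_inf_mat F A i j = (\<Sum>k\<le>degree F. coeff F k * inf_mat_pow A k i j)"

(* Lambda_n : tuples 0 < n_1 < ... < n_l < n, l >= 1, represented as sorted lists *)
definition Lambda_set :: "nat \<Rightarrow> nat list set"
  where "Lambda_set n = {ns. ns \<noteq> [] \<and> sorted_wrt (<) ns \<and> set ns \<subseteq> {1..<n}}"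

(* k_1 = n_1, k_i = n_i - n_{i-1}, k_{l+1} = n - n_l *)
definition gaps :: "nat \<Rightarrow> nat list \<Rightarrow> nat list"
  where "gaps n ns = map (\<lambda>i. (ns @ [n]) ! i - (0 # ns) ! i) [0..<length ns + 1]"

definition mho :: "nat \<Rightarrow> nat list \<Rightarrow> real"
  where "mho n ns = (-1) ^ (length ns + 1) / real (length ns + 1)
                    * fact n / (\<Prod>k\<leftarrow>gaps n ns. fact k)"

(* Gamma^{ns}_o(M): paths pi(0),...,pi(n) in the graph with edge j -> i iff M_ij \<noteq> 0,
   with pi(0) = pi(n) < o and max{pi(n_1),...,pi(n_l)} >= o *)
definition Gamma_set :: "nat \<Rightarrow> nat list \<Rightarrow> nat \<Rightarrow> (nat \<Rightarrow> nat \<Rightarrow> real) \<Rightarrow> nat list set"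
  where "Gamma_set n ns ofs M = {\<pi>. length \<pi> = n + 1
      \<and> (\<forall>i\<in>{1..n}. M (\<pi> ! i) (\<pi> ! (i - 1)) \<noteq> 0)
      \<and> \<pi> ! 0 = \<pi> ! n \<and> \<pi> ! 0 < ofs
      \<and> Max ((\<lambda>m. \<pi> ! m) ` set ns) \<ge> ofs}"

definition moment_fps :: "'a measure \<Rightarrow> ('a \<Rightarrow> real) \<Rightarrow> real fps"
  where "moment_fps S X = Abs_fps (\<lambda>m. (\<integral>\<omega>. X \<omega> ^ m \<partial>S) / fact m)"

(* n-th cumulant: n! times the n-th coefficient of the formal series log(moment series),
   log A = ln(1 + (A - 1)) *)
definition cumulant :: "'a measure \<Rightarrow> ('a \<Rightarrow> real) \<Rightarrow> nat \<Rightarrow> real"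
  where "cumulant S X n = fact n * fps_nth (fps_ln 1 oo (moment_fps S X - 1)) n"

end

theory Submission
  imports Defs
begin

definition band :: "nat \<Rightarrow> (nat \<Rightarrow> nat \<Rightarrow> real) \<Rightarrow> bool" where
  "band w A \<longleftrightarrow> (\<forall>i j. i + w \<le> j \<or> j + w \<le> i \<longrightarrow> A i j = 0)"

lemma band_mono: "band w A \<Longrightarrow> w \<le> w' \<Longrightarrow> band w' A"
  unfolding band_def by auto

lemma sum_ext_zero:
  fixes f :: "nat \<Rightarrow> 'b::comm_monoid_add"
  assumes "\<And>d. d \<ge> m \<Longrightarrow> f d = 0" "m \<le> R"
  shows "sum f {..<R} = sum f {..<m}"
proof -
  have "{..<R} = {..<m} \<union> {m..<R}" using assms(2) by auto
  then have "sum f {..<R} = sum f {..<m} + sum f {m..<R}"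
    by (simp add: sum.union_disjoint[symmetric] ivl_disj_int)
  moreover have "sum f {m..<R} = 0" using assms(1) by auto
  ultimately show ?thesis by simp
qed

lemma imm_sum:
  assumes "band w A" "R \<ge> i + w"
  shows "inf_mat_mult A B i j = (\<Sum>k<R. A i k * B k j)"
proof -
  have z: "A i k = 0" if "k \<ge> R" for k
  proof -
    have "i + w \<le> k" using that assms(2) by linarith
    then show "A i k = 0" using assms(1) unfolding band_def by blast
  qed
  have "inf_mat_mult A B i j = infsum (\<lambda>k. A i k * B k j) {..<R}"
    unfolding inf_mat_mult_def
    by (rule infsum_cong_neutral) (auto simp: z)
  then show ?thesis by simp
qed

lemma band_mult:
  assumes "band w1 A" "band w2 B"
  shows "band (w1 + w2) (inf_mat_mult A B)"
  unfolding band_def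
proof (intro allI impI)
  fix i j assume h: "i + (w1 + w2) \<le> j \<or> j + (w1 + w2) \<le> i"
  have "inf_mat_mult A B i j = (\<Sum>k<i+w1. A i k * B k j)"
    by (rule imm_sum[OF assms(1)]) simp
  also have "\<dots> = 0"
  proof (rule sum.neutral, intro ballI)
    fix k assume k: "k \<in> {..<i+w1}"
    show "A i k * B k j = 0"
    proof (cases "k + w1 \<le> i")
      case True then show ?thesis using assms(1) by (simp add: band_def)
    next
      case False
      then have "k + w2 \<le> j \<or> j + w2 \<le> k" using h k by auto
      then have "B k j = 0" using assms(2) unfolding band_def by blast
      then show ?thesis by simp
    qed
  qed
  finally show "inf_mat_mult A B i j = 0" .
qed

lemma band_pow:
  assumes "band w A"
  shows "band (k * w + 1) (inf_mat_pow A k)"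
proof (induction k)
  case 0 then show ?case by (auto simp: band_def)
next
  case (Suc k)
  have "band (k * w + 1 + w) (inf_mat_pow A (Suc k))"
    using band_mult[OF Suc assms] by simp
  then show ?case by (simp add: add.commute add.left_commute)
qed

lemma band_poly:
  assumes "band w A"
  shows "band (degree F * w + 1) (poly_inf_mat F A)"
  unfolding band_def poly_inf_mat_def
proof (intro allI impI)
  fix i j assume h: "i + (degree F * w + 1) \<le> j \<or> j + (degree F * w + 1) \<le> i"
  show "(\<Sum>k\<le>degree F. coeff F k * inf_mat_pow A k i j) = 0"
  proof (rule sum.neutral, intro ballI)
    fix k assume "k \<in> {..degree F}"
    then have "k * w \<le> degree F * w" by simp
    then have "band (degree F * w + 1) (inf_mat_pow A k)"
      using band_mono[OF band_pow[OF assms, of k]] by simp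
    then show "coeff F k * inf_mat_pow A k i j = 0" using h unfolding band_def by (metis mult_eq_0_iff)
  qed
qed

lemma pow_recur:
  fixes g :: "real \<Rightarrow> real" and P :: "nat \<Rightarrow> real \<Rightarrow> real"
  assumes bA: "band w A" and w1: "w \<ge> 1"
    and rec: "\<And>a R. R \<ge> a + w \<Longrightarrow> g x * P a x = (\<Sum>c<R. A a c * P c x)"
  shows "R \<ge> a + k * w + 1 \<Longrightarrow> g x ^ k * P a x = (\<Sum>c<R. inf_mat_pow A k a c * P c x)"
proof (induction k arbitrary: R)
  case 0
  have "(\<Sum>c<R. inf_mat_pow A 0 a c * P c x) = (\<Sum>c<R. (if c = a then P a x else 0))"
    by (intro sum.cong) auto
  also have "\<dots> = P a x" using 0 by (simp add: sum.delta)
  finally show ?case by simp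
next
  case (Suc k)
  define R0 where "R0 = a + k * w + 1"
  have R0R: "R \<ge> R0 + w" using Suc.prems by (simp add: R0_def algebra_simps)
  have "g x ^ Suc k * P a x = g x * (g x ^ k * P a x)" by simp
  also have "\<dots> = g x * (\<Sum>c<R0. inf_mat_pow A k a c * P c x)"
    using Suc.IH[of R0] by (simp add: R0_def)
  also have "\<dots> = (\<Sum>c<R0. inf_mat_pow A k a c * (g x * P c x))"
    by (simp add: sum_distrib_left algebra_simps)
  also have "\<dots> = (\<Sum>c<R0. inf_mat_pow A k a c * (\<Sum>d<R. A c d * P d x))"
    by (intro sum.cong refl) (subst rec[of _ R], use R0R in auto)
  also have "\<dots> = (\<Sum>d<R. (\<Sum>c<R0. inf_mat_pow A k a c * A c d) * P d x)"
    apply (simp only: sum_distrib_left sum_distrib_right mult.assoc)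
    apply (subst sum.swap)
    apply (rule refl)
    done
  also have "\<dots> = (\<Sum>d<R. inf_mat_pow A (Suc k) a d * P d x)"
  proof (intro sum.cong refl)
    fix d
    have "band (k * w + 1) (inf_mat_pow A k)" by (rule band_pow[OF bA])
    then have "inf_mat_pow A (Suc k) a d = (\<Sum>c<R0. inf_mat_pow A k a c * A c d)"
      unfolding inf_mat_pow.simps by (rule imm_sum) (simp add: R0_def)
    then show "(\<Sum>c<R0. inf_mat_pow A k a c * A c d) * P d x = inf_mat_pow A (Suc k) a d * P d x"
      by simp
  qed
  finally show ?case .
qed



locale ens =
  fixes S :: "'a measure" and \<xi> :: "'a \<Rightarrow> nat \<Rightarrow> real" and \<mu> :: "real measure"
    and P Q :: "nat \<Rightarrow> real \<Rightarrow> real" and J :: "nat \<Rightarrow> nat \<Rightarrow> real"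
    and W N :: nat and F :: "real poly"
  assumes prob: "prob_space S"
    and sets_mu: "sets \<mu> = sets borel" and sf: "sigma_finite_measure \<mu>"
    and biorth: "\<forall>k m. integrable \<mu> (\<lambda>x. P k x * Q m x)
               \<and> (\<integral>x. P k x * Q m x \<partial>\<mu>) = (if k = m then 1 else 0)"
    and distr: "distributed S (PiM {..<N} (\<lambda>_. \<mu>)) \<xi>
           (\<lambda>x. ennreal (det (Matrix.mat N N (\<lambda>(i, j). biorth_kernel P Q N (x i) (x j))) / fact N))"
    and Wpos: "W > 0" and Jband: "\<forall>i j. int W \<le> \<bar>int i - int j\<bar> \<longrightarrow> J i j = 0"
    and rec: "\<forall>x i. x * P i x = (\<Sum>j<i + W. J i j * P j x)"
begin

definition "M = poly_inf_mat F J"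
definition "wM = degree F * W + 1"
definition "Mp m = inf_mat_pow M m"

lemma bandJ: "band W J"
  unfolding band_def
proof (intro allI impI)
  fix i j :: nat assume "i + W \<le> j \<or> j + W \<le> i"
  then have "int W \<le> \<bar>int i - int j\<bar>" by auto
  then show "J i j = 0" using Jband by blast
qed

lemma bandM: "band wM M"
  unfolding M_def wM_def by (rule band_poly[OF bandJ])

lemma wM_pos: "wM \<ge> 1" by (simp add: wM_def)

lemma recJ: "R \<ge> a + W \<Longrightarrow> x * P a x = (\<Sum>c<R. J a c * P c x)"
proof -
  assume R: "R \<ge> a + W"
  have z: "J a d * P d x = 0" if "d \<ge> a + W" for d
  proof -
    have "J a d = 0" using bandJ that unfolding band_def by blast
    then show ?thesis by simp
  qed
  have "(\<Sum>c<R. J a c * P c x) = (\<Sum>c<a+W. J a c * P c x)"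
    by (rule sum_ext_zero[OF z R])
  then show ?thesis using rec by simp
qed

lemma recX: "R \<ge> a + k * W + 1 \<Longrightarrow> x ^ k * P a x = (\<Sum>c<R. inf_mat_pow J k a c * P c x)"
proof -
  assume h: "R \<ge> a + k * W + 1"
  have "(\<lambda>y. y) x ^ k * P a x = (\<Sum>c<R. inf_mat_pow J k a c * P c x)"
    by (rule pow_recur[where g="\<lambda>y. y" and A=J and w=W and P=P]) (use bandJ Wpos recJ h in auto)
  then show ?thesis by simp
qed

lemma recM: "R \<ge> a + wM \<Longrightarrow> poly F x * P a x = (\<Sum>c<R. M a c * P c x)"
proof -
  assume R: "R \<ge> a + wM"
  have "poly F x * P a x = (\<Sum>k\<le>degree F. coeff F k * (x ^ k * P a x))"
    by (simp add: poly_altdef sum_distrib_right mult.assoc)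
  also have "\<dots> = (\<Sum>k\<le>degree F. coeff F k * (\<Sum>c<R. inf_mat_pow J k a c * P c x))"
  proof (intro sum.cong refl)
    fix k assume "k \<in> {..degree F}"
    then have "k * W \<le> degree F * W" by simp
    then have "R \<ge> a + k * W + 1" using R unfolding wM_def by linarith
    then show "coeff F k * (x ^ k * P a x) = coeff F k * (\<Sum>c<R. inf_mat_pow J k a c * P c x)"
      by (simp add: recX)
  qed
  also have "\<dots> = (\<Sum>c<R. M a c * P c x)"
    unfolding M_def poly_inf_mat_def
    apply (simp only: sum_distrib_left sum_distrib_right mult.assoc)
    apply (subst sum.swap)
    apply (rule refl)
    done
  finally show ?thesis .
qed

lemma recMp: "R \<ge> a + m * wM + 1 \<Longrightarrow> poly F x ^ m * P a x = (\<Sum>c<R. Mp m a c * P c x)"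
  unfolding Mp_def
  by (rule pow_recur[where g="poly F" and A=M and w=wM and P=P]) (use bandM wM_pos recM in auto)

lemma bandMp: "band (m * wM + 1) (Mp m)"
  unfolding Mp_def by (rule band_pow[OF bandM])

lemma int_Fpow:
  "integrable \<mu> (\<lambda>x. poly F x ^ m * P a x * Q b x)"
  "(\<integral>x. poly F x ^ m * P a x * Q b x \<partial>\<mu>) = Mp m a b"
proof -
  define R where "R = a + m * wM + 1 + b + 1"
  have eq: "poly F x ^ m * P a x * Q b x = (\<Sum>c<R. Mp m a c * (P c x * Q b x))" for x
  proof -
    have h: "poly F x ^ m * P a x = (\<Sum>c<R. Mp m a c * P c x)"
      by (rule recMp) (simp add: R_def)
    have "poly F x ^ m * P a x * Q b x = (\<Sum>c<R. Mp m a c * P c x) * Q b x" using h by simp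
    also have "\<dots> = (\<Sum>c<R. Mp m a c * (P c x * Q b x))" by (simp add: sum_distrib_right mult.assoc)
    finally show ?thesis .
  qed
  show "integrable \<mu> (\<lambda>x. poly F x ^ m * P a x * Q b x)"
    unfolding eq using biorth by auto
  have "(\<integral>x. poly F x ^ m * P a x * Q b x \<partial>\<mu>) = (\<Sum>c<R. Mp m a c * (if c = b then 1 else 0))"
    unfolding eq using biorth by (simp add: integral_sum)
  also have "\<dots> = (\<Sum>c<R. if c = b then Mp m a c else 0)"
    by (intro sum.cong) auto
  also have "\<dots> = Mp m a b" by (simp add: R_def)
  finally show "(\<integral>x. poly F x ^ m * P a x * Q b x \<partial>\<mu>) = Mp m a b" .
qed

end


section \<open>Coefficients of finite products of power series\<close>

definition comps :: "'i set \<Rightarrow> nat \<Rightarrow> ('i \<Rightarrow> nat) set" where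
  "comps I m = {c \<in> I \<rightarrow>\<^sub>E {..m}. sum c I = m}"

lemma finite_comps: "finite I \<Longrightarrow> finite (comps I m)"
  unfolding comps_def by (rule finite_subset[of _ "I \<rightarrow>\<^sub>E {..m}"]) (auto intro: finite_PiE)

lemma comps_empty: "comps {} m = (if m = 0 then {\<lambda>_. undefined} else {})"
  unfolding comps_def by auto

lemma prod_fps_nth:
  fixes f :: "'i \<Rightarrow> 'b::comm_ring_1 fps"
  assumes "finite I"
  shows "fps_nth (\<Prod>i\<in>I. f i) m = (\<Sum>c\<in>comps I m. \<Prod>i\<in>I. fps_nth (f i) (c i))"
  using assms
proof (induction I arbitrary: m rule: finite_induct)
  case empty
  then show ?case by (simp add: comps_empty)
next
  case (insert a I)
  have "fps_nth (\<Prod>i\<in>insert a I. f i) m = fps_nth (f a * (\<Prod>i\<in>I. f i)) m"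
    using insert by simp
  also have "\<dots> = (\<Sum>k=0..m. fps_nth (f a) k * fps_nth (\<Prod>i\<in>I. f i) (m - k))"
    by (simp add: fps_mult_nth)
  also have "\<dots> = (\<Sum>k=0..m. \<Sum>c\<in>comps I (m - k). fps_nth (f a) k * (\<Prod>i\<in>I. fps_nth (f i) (c i)))"
    by (simp add: insert.IH sum_distrib_left)
  also have "\<dots> = (\<Sum>p\<in>Sigma {0..m} (\<lambda>k. comps I (m - k)). fps_nth (f a) (fst p) * (\<Prod>i\<in>I. fps_nth (f i) (snd p i)))"
    by (subst sum.Sigma) (auto simp: finite_comps insert.hyps split_beta)
  also have "\<dots> = (\<Sum>c\<in>comps (insert a I) m. \<Prod>i\<in>insert a I. fps_nth (f i) (c i))"
  proof (rule sum.reindex_bij_witness[where i="\<lambda>c. (c a, restrict c I)" and j="\<lambda>p. (snd p)(a := fst p)"])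
    fix p assume p: "p \<in> Sigma {0..m} (\<lambda>k. comps I (m - k))"
    then obtain k c where pkc: "p = (k, c)" "k \<le> m" "c \<in> comps I (m - k)" by auto
    then have c: "c \<in> I \<rightarrow>\<^sub>E {..m-k}" "sum c I = m - k" by (auto simp: comps_def)
    have aI: "a \<notin> I" by (rule insert.hyps(2))
    have r1: "restrict (c(a := k)) I = restrict c I"
      using aI unfolding restrict_def by (intro ext) auto
    have r2: "restrict c I = c" using c(1) by (rule PiE_restrict)
    show "(((snd p)(a := fst p)) a, restrict ((snd p)(a := fst p)) I) = p"
      using pkc r1 r2 by simp
    have s1: "sum (c(a := k)) I = sum c I"
      using aI by (intro sum.cong) auto
    have "sum (c(a := k)) (insert a I) = k + sum c I"
      using insert.hyps(1) aI s1 by (simp add: sum.insert)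
    then have sm: "sum (c(a := k)) (insert a I) = m" using c(2) pkc(2) by simp
    have ce: "c(a := k) \<in> insert a I \<rightarrow>\<^sub>E {..m}"
    proof (rule PiE_I)
      fix x assume "x \<in> insert a I"
      then show "(c(a := k)) x \<in> {..m}"
        using pkc(2) c(1) by (cases "x = a") (auto simp: PiE_iff)
    next
      fix x assume "x \<notin> insert a I"
      then show "(c(a := k)) x = undefined" using c(1) by (auto simp: PiE_iff extensional_def)
    qed
    show "(snd p)(a := fst p) \<in> comps (insert a I) m"
      using pkc ce sm by (simp add: comps_def)
    have "(\<Prod>i\<in>I. fps_nth (f i) ((c(a:=k)) i)) = (\<Prod>i\<in>I. fps_nth (f i) (c i))"
      using aI by (intro prod.cong) auto
    then show "(\<Prod>i\<in>insert a I. fps_nth (f i) (((snd p)(a := fst p)) i)) = fps_nth (f a) (fst p) * (\<Prod>i\<in>I. fps_nth (f i) (snd p i))"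
      using pkc insert.hyps(1) aI by (simp add: prod.insert)
  next
    fix c assume c: "c \<in> comps (insert a I) m"
    then have cc: "c \<in> insert a I \<rightarrow>\<^sub>E {..m}" "sum c (insert a I) = m" by (auto simp: comps_def)
    have aI: "a \<notin> I" by (rule insert.hyps(2))
    have s: "c a + sum c I = m" using cc(2) insert.hyps by simp
    have "(restrict c I)(a := c a) = c"
    proof (rule ext)
      fix x show "((restrict c I)(a := c a)) x = c x"
        using cc(1) by (cases "x = a"; cases "x \<in> I") (auto simp: PiE_iff extensional_def)
    qed
    then show "(snd (c a, restrict c I))(a := fst (c a, restrict c I)) = c" by simp
    have le: "c x \<le> m - c a" if "x \<in> I" for x
    proof -
      have "c x \<le> sum c I" using that insert.hyps(1) by (intro member_le_sum) auto
      then show ?thesis using s by linarith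
    qed
    have "restrict c I \<in> I \<rightarrow>\<^sub>E {..m - c a}"
      using le by (auto simp: PiE_iff)
    moreover have "sum (restrict c I) I = m - c a" using s by simp
    ultimately have "restrict c I \<in> comps I (m - c a)" by (simp add: comps_def)
    moreover have "c a \<le> m" using s by simp
    ultimately show "(c a, restrict c I) \<in> Sigma {0..m} (\<lambda>k. comps I (m - k))" by auto
  qed
  finally show ?case .
qed

lemma fps_exp_sum:
  fixes g :: "'i \<Rightarrow> 'b::field_char_0"
  assumes "finite I"
  shows "fps_exp (\<Sum>i\<in>I. g i) = (\<Prod>i\<in>I. fps_exp (g i))"
  using assms by (induction I rule: finite_induct) (auto simp: fps_exp_add_mult)

section \<open>Determinant as a double sum over permutations\<close>

lemma sign_sq: "signof p * signof p = (1::'b::ring_1)"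
  by (simp add: sign_def)

lemma double_perm_det:
  fixes E :: "nat \<Rightarrow> nat \<Rightarrow> 'b::comm_ring_1"
  shows "(\<Sum>\<sigma>\<in>{p. p permutes {0..<N}}. \<Sum>\<tau>\<in>{p. p permutes {0..<N}}.
            signof \<sigma> * signof \<tau> * (\<Prod>i=0..<N. E (\<sigma> i) (\<tau> i)))
        = of_nat (fact N) * det (mat N N (\<lambda>(i,j). E i j))"
proof -
  let ?P = "{p. p permutes {0..<N}}"
  have inner: "(\<Sum>\<tau>\<in>?P. signof \<sigma> * signof \<tau> * (\<Prod>i=0..<N. E (\<sigma> i) (\<tau> i)))
        = det (mat N N (\<lambda>(i,j). E i j))" if s: "\<sigma> \<in> ?P" for \<sigma>
  proof -
    have sp: "\<sigma> permutes {0..<N}" using s by simp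
    have "(\<Sum>\<tau>\<in>?P. signof \<sigma> * signof \<tau> * (\<Prod>i=0..<N. E (\<sigma> i) (\<tau> i)))
        = (\<Sum>\<tau>\<in>?P. signof \<sigma> * signof (\<tau> \<circ> \<sigma>) * (\<Prod>i=0..<N. E (\<sigma> i) ((\<tau> \<circ> \<sigma>) i)))"
      by (rule sum_permutations_compose_right[OF sp])
    also have "\<dots> = (\<Sum>\<tau>\<in>?P. signof \<tau> * (\<Prod>i=0..<N. E i (\<tau> i)))"
    proof (intro sum.cong refl)
      fix \<tau> assume t: "\<tau> \<in> ?P"
      have pt: "permutation \<tau>" "permutation \<sigma>" using t sp by (auto simp: permutation_permutes)
      have sg: "signof (\<tau> \<circ> \<sigma>) = (signof \<tau> * signof \<sigma> :: 'b)"
        by (simp add: sign_compose[OF pt])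
      have pr: "(\<Prod>i=0..<N. E (\<sigma> i) ((\<tau> \<circ> \<sigma>) i)) = (\<Prod>i=0..<N. E i (\<tau> i))"
        using prod.reindex_bij_betw[OF permutes_imp_bij[OF sp], of "\<lambda>j. E j (\<tau> j)"] by simp
      show "signof \<sigma> * signof (\<tau> \<circ> \<sigma>) * (\<Prod>i=0..<N. E (\<sigma> i) ((\<tau> \<circ> \<sigma>) i))
            = signof \<tau> * (\<Prod>i=0..<N. E i (\<tau> i))"
        unfolding pr sg
        by (metis (no_types, lifting) mult.assoc mult.commute mult.left_neutral sign_sq)
    qed
    also have "\<dots> = det (mat N N (\<lambda>(i,j). E i j))"
      by (subst det_def'[of _ N]) (auto intro!: sum.cong prod.cong)
    finally show ?thesis .
  qed
  have "(\<Sum>\<sigma>\<in>?P. \<Sum>\<tau>\<in>?P. signof \<sigma> * signof \<tau> * (\<Prod>i=0..<N. E (\<sigma> i) (\<tau> i)))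
      = (\<Sum>\<sigma>\<in>?P. det (mat N N (\<lambda>(i,j). E i j)))"
    using inner by (rule sum.cong[OF refl])
  also have "\<dots> = of_nat (card ?P) * det (mat N N (\<lambda>(i,j). E i j))" by simp
  also have "card ?P = fact N" by (rule card_permutations) auto
  finally show ?thesis by simp
qed



section \<open>Finite square matrices as functions\<close>

definition mm :: "nat \<Rightarrow> (nat \<Rightarrow> nat \<Rightarrow> 'b::comm_ring_1) \<Rightarrow> (nat \<Rightarrow> nat \<Rightarrow> 'b) \<Rightarrow> nat \<Rightarrow> nat \<Rightarrow> 'b" where
  "mm N X Y i j = (\<Sum>k<N. X i k * Y k j)"

definition idm :: "nat \<Rightarrow> nat \<Rightarrow> 'b::comm_ring_1" where
  "idm i j = (if i = j then 1 else 0)"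

fun mpow :: "nat \<Rightarrow> (nat \<Rightarrow> nat \<Rightarrow> 'b::comm_ring_1) \<Rightarrow> nat \<Rightarrow> nat \<Rightarrow> nat \<Rightarrow> 'b" where
  "mpow N X 0 = idm"
| "mpow N X (Suc l) = mm N (mpow N X l) X"

definition tr :: "nat \<Rightarrow> (nat \<Rightarrow> nat \<Rightarrow> 'b::comm_ring_1) \<Rightarrow> 'b" where
  "tr N X = (\<Sum>i<N. X i i)"

lemma mm_assoc: "mm N (mm N X Y) Z = mm N X (mm N Y Z)"
proof (intro ext)
  fix i j
  show "mm N (mm N X Y) Z i j = mm N X (mm N Y Z) i j"
    unfolding mm_def
    apply (simp only: sum_distrib_left sum_distrib_right mult.assoc)
    apply (subst sum.swap)
    apply (rule refl)
    done
qed

lemma mm_idm_left: "i < N \<Longrightarrow> mm N idm X i j = X i j"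
proof -
  assume i: "i < N"
  have "mm N idm X i j = (\<Sum>k<N. if k = i then X k j else 0)"
    unfolding mm_def idm_def by (intro sum.cong) auto
  also have "\<dots> = X i j" using i by simp
  finally show ?thesis .
qed

lemma mm_idm_right: "j < N \<Longrightarrow> mm N X idm i j = X i j"
proof -
  assume j: "j < N"
  have "mm N X idm i j = (\<Sum>k<N. if k = j then X i k else 0)"
    unfolding mm_def idm_def by (intro sum.cong) auto
  also have "\<dots> = X i j" using j by simp
  finally show ?thesis .
qed

lemma mm_cong: "(\<And>i j. i < N \<Longrightarrow> j < N \<Longrightarrow> X i j = X' i j) \<Longrightarrow> (\<And>i j. i < N \<Longrightarrow> j < N \<Longrightarrow> Y i j = Y' i j)
   \<Longrightarrow> i < N \<Longrightarrow> j < N \<Longrightarrow> mm N X Y i j = mm N X' Y' i j"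
  unfolding mm_def by (intro sum.cong) auto

lemma mm_cong_left: "(\<And>i j. i < N \<Longrightarrow> j < N \<Longrightarrow> X i j = X' i j) \<Longrightarrow> i < N \<Longrightarrow> mm N X Y i j = mm N X' Y i j"
  unfolding mm_def by (intro sum.cong) auto

lemma mm_cong_right: "(\<And>i j. i < N \<Longrightarrow> j < N \<Longrightarrow> Y i j = Y' i j) \<Longrightarrow> j < N \<Longrightarrow> mm N X Y i j = mm N X Y' i j"
  unfolding mm_def by (intro sum.cong) auto

lemma mm_add_left: "mm N (\<lambda>i j. X i j + X' i j) Y = (\<lambda>i j. mm N X Y i j + mm N X' Y i j)"
  unfolding mm_def by (intro ext) (simp add: distrib_right sum.distrib)

lemma mm_add_right: "mm N X (\<lambda>i j. Y i j + Y' i j) = (\<lambda>i j. mm N X Y i j + mm N X Y' i j)"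
  unfolding mm_def by (intro ext) (simp add: distrib_left sum.distrib)

lemma mm_smult_right: "mm N X (\<lambda>i j. c * Y i j) = (\<lambda>i j. c * mm N X Y i j)"
  unfolding mm_def by (intro ext) (simp add: sum_distrib_left algebra_simps)

lemma mm_smult_left: "mm N (\<lambda>i j. c * X i j) Y = (\<lambda>i j. c * mm N X Y i j)"
  unfolding mm_def by (intro ext) (simp add: sum_distrib_left algebra_simps)

lemma tr_comm: "tr N (mm N X Y) = tr N (mm N Y X)"
  unfolding tr_def mm_def
  apply (subst sum.swap)
  apply (simp add: mult.commute)
  done

lemma tr_add: "tr N (\<lambda>i j. X i j + Y i j) = tr N X + tr N Y"
  unfolding tr_def by (simp add: sum.distrib)

lemma tr_smult: "tr N (\<lambda>i j. c * X i j) = c * tr N X"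
  unfolding tr_def by (simp add: sum_distrib_left)

lemma tr_cong: "(\<And>i. i < N \<Longrightarrow> X i i = Y i i) \<Longrightarrow> tr N X = tr N Y"
  unfolding tr_def by (intro sum.cong) auto

lemma mpow_add: "i < N \<Longrightarrow> j < N \<Longrightarrow> mm N (mpow N X l) (mpow N X r) i j = mpow N X (l + r) i j"
proof (induction r arbitrary: i j)
  case 0 then show ?case by (simp add: mm_idm_right)
next
  case (Suc r)
  have "mm N (mpow N X l) (mpow N X (Suc r)) i j = mm N (mpow N X l) (mm N (mpow N X r) X) i j" by simp
  also have "\<dots> = mm N (mm N (mpow N X l) (mpow N X r)) X i j" by (simp only: mm_assoc)
  also have "\<dots> = mm N (mpow N X (l + r)) X i j"
    by (rule mm_cong_left) (use Suc in auto)
  also have "\<dots> = mpow N X (l + Suc r) i j" by simp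
  finally show ?case .
qed

lemma mpow_Suc_left: "i < N \<Longrightarrow> j < N \<Longrightarrow> mpow N X (Suc l) i j = mm N X (mpow N X l) i j"
proof -
  assume ij: "i < N" "j < N"
  have "mpow N X (1 + l) i j = mm N (mpow N X 1) (mpow N X l) i j"
    using mpow_add[OF ij, of X 1 l] by simp
  also have "\<dots> = mm N X (mpow N X l) i j"
    by (rule mm_cong_left) (use ij in \<open>auto simp: mm_idm_left\<close>)
  finally show ?thesis by simp
qed

section \<open>Derivatives\<close>

definition fd :: "(nat \<Rightarrow> nat \<Rightarrow> 'b::comm_ring_1 fps) \<Rightarrow> nat \<Rightarrow> nat \<Rightarrow> 'b fps" where
  "fd X i j = fps_deriv (X i j)"

lemma fd_mm: "fd (mm N X Y) i j = mm N (fd X) Y i j + mm N X (fd Y) i j"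
  unfolding fd_def mm_def by (simp add: fps_deriv_sum sum.distrib[symmetric] algebra_simps)

lemma fd_idm: "fd idm i j = 0"
  unfolding fd_def idm_def by simp

lemma tr_fd: "fps_deriv (tr N X) = tr N (fd X)"
  unfolding tr_def fd_def by (simp add: fps_deriv_sum)

lemma tr_fd_pow:
  "tr N (mm N (fd (mpow N A l)) (mpow N A r)) = of_nat l * tr N (mm N (fd A) (mpow N A (l + r - 1)))"
proof (induction l arbitrary: r)
  case 0
  have "tr N (mm N (fd (mpow N A 0)) (mpow N A r)) = 0"
    unfolding tr_def mm_def by (simp add: fd_idm)
  then show ?case by simp
next
  case (Suc l)
  let ?X = "mm N (mm N (fd (mpow N A l)) A) (mpow N A r)"
  let ?Y = "mm N (mm N (mpow N A l) (fd A)) (mpow N A r)"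
  have e1: "mm N (fd (mpow N A (Suc l))) (mpow N A r) = (\<lambda>i j. ?X i j + ?Y i j)"
  proof (intro ext)
    fix i j
    have "fd (mpow N A (Suc l)) = (\<lambda>i j. mm N (fd (mpow N A l)) A i j + mm N (mpow N A l) (fd A) i j)"
      by (intro ext) (simp only: mpow.simps fd_mm)
    then show "mm N (fd (mpow N A (Suc l))) (mpow N A r) i j = ?X i j + ?Y i j"
      by (simp only: mm_add_left)
  qed
  have "tr N (mm N (fd (mpow N A (Suc l))) (mpow N A r)) = tr N ?X + tr N ?Y"
    by (simp only: e1 tr_add)
  also have "tr N ?X = tr N (mm N (fd (mpow N A l)) (mpow N A (Suc r)))"
  proof -
    have "tr N ?X = tr N (mm N (fd (mpow N A l)) (mm N A (mpow N A r)))"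
      by (simp only: mm_assoc)
    also have "\<dots> = tr N (mm N (fd (mpow N A l)) (mpow N A (Suc r)))"
      by (intro tr_cong mm_cong_right) (simp only: mpow_Suc_left)
    finally show ?thesis .
  qed
  also have "\<dots> = of_nat l * tr N (mm N (fd A) (mpow N A (l + Suc r - 1)))"
    by (rule Suc.IH)
  also have "tr N ?Y = tr N (mm N (fd A) (mpow N A (l + r)))"
  proof -
    have "tr N ?Y = tr N (mm N (mpow N A l) (mm N (fd A) (mpow N A r)))"
      by (simp only: mm_assoc)
    also have "\<dots> = tr N (mm N (mm N (fd A) (mpow N A r)) (mpow N A l))"
      by (rule tr_comm)
    also have "\<dots> = tr N (mm N (fd A) (mm N (mpow N A r) (mpow N A l)))"
      by (simp only: mm_assoc)
    also have "\<dots> = tr N (mm N (fd A) (mpow N A (l + r)))"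
      by (intro tr_cong mm_cong_right) (simp only: mpow_add add.commute)
    finally show ?thesis .
  qed
  finally have "tr N (mm N (fd (mpow N A (Suc l))) (mpow N A r))
     = of_nat l * tr N (mm N (fd A) (mpow N A (l + r))) + tr N (mm N (fd A) (mpow N A (l + r)))"
    by simp
  then show ?case by (simp add: algebra_simps)
qed



definition fdet :: "nat \<Rightarrow> (nat \<Rightarrow> nat \<Rightarrow> 'b::comm_ring_1) \<Rightarrow> 'b" where
  "fdet N E = det (mat N N (\<lambda>(i,j). E i j))"

definition cof :: "nat \<Rightarrow> (nat \<Rightarrow> nat \<Rightarrow> 'b::comm_ring_1) \<Rightarrow> nat \<Rightarrow> nat \<Rightarrow> 'b" where
  "cof N E i j = cofactor (mat N N (\<lambda>(i,j). E i j)) i j"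

lemma fdet_def': "fdet N E = (\<Sum>p\<in>{p. p permutes {0..<N}}. signof p * (\<Prod>i=0..<N. E i (p i)))"
proof -
  have "fdet N E = (\<Sum>p\<in>{p. p permutes {0..<N}}. signof p * (\<Prod>i=0..<N. mat N N (\<lambda>(i,j). E i j) $$ (i, p i)))"
    unfolding fdet_def by (rule det_def') simp
  also have "\<dots> = (\<Sum>p\<in>{p. p permutes {0..<N}}. signof p * (\<Prod>i=0..<N. E i (p i)))"
  proof (intro sum.cong refl arg_cong2[where f="(*)"] prod.cong)
    fix p i assume p: "p \<in> {p. p permutes {0..<N}}" and i: "i \<in> {0..<N}"
    have "p i < N" using p i by (auto dest: permutes_in_image)
    then show "mat N N (\<lambda>(i,j). E i j) $$ (i, p i) = E i (p i)" using i by simp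
  qed
  finally show ?thesis .
qed

lemma fps_deriv_prod:
  fixes f :: "'i \<Rightarrow> 'b::comm_ring_1 fps"
  assumes "finite I"
  shows "fps_deriv (\<Prod>i\<in>I. f i) = (\<Sum>i\<in>I. fps_deriv (f i) * (\<Prod>j\<in>I-{i}. f j))"
  using assms
proof (induction I rule: finite_induct)
  case empty then show ?case by simp
next
  case (insert a I)
  have "fps_deriv (\<Prod>i\<in>insert a I. f i) = fps_deriv (f a * (\<Prod>i\<in>I. f i))"
    using insert by simp
  also have "\<dots> = fps_deriv (f a) * (\<Prod>i\<in>I. f i) + f a * (\<Sum>i\<in>I. fps_deriv (f i) * (\<Prod>j\<in>I-{i}. f j))"
    using insert by (simp add: algebra_simps)
  also have "\<dots> = (\<Sum>i\<in>insert a I. fps_deriv (f i) * (\<Prod>j\<in>insert a I-{i}. f j))"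
  proof -
    have "insert a I - {a} = I" using insert by auto
    moreover have "(\<Prod>j\<in>insert a I-{i}. f j) = f a * (\<Prod>j\<in>I-{i}. f j)" if "i \<in> I" for i
    proof -
      have "insert a I - {i} = insert a (I - {i})" using that insert by auto
      then show ?thesis using insert by simp
    qed
    ultimately show ?thesis using insert
      by (simp add: sum_distrib_left algebra_simps cong: sum.cong)
  qed
  finally show ?case .
qed

lemma cof_replace_row:
  assumes i: "i < N" and j: "j < N"
  shows "cof N (\<lambda>a b. if a = i then G a b else E a b) i j = cof N E i j"
proof -
  have "mat_delete (mat N N (\<lambda>(a,b). if a = i then G a b else E a b)) i j = mat_delete (mat N N (\<lambda>(a,b). E a b)) i j"
    by (rule eq_matI) (auto simp: mat_delete_def)
  then show ?thesis unfolding cof_def cofactor_def by simp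
qed

lemma jacobi:
  fixes E :: "nat \<Rightarrow> nat \<Rightarrow> 'b::comm_ring_1 fps"
  shows "fps_deriv (fdet N E) = (\<Sum>i<N. \<Sum>j<N. fd E i j * cof N E i j)"
proof -
  let ?P = "{p. p permutes {0..<N}}"
  have fP: "finite ?P" by (rule finite_permutations) simp
  have "fps_deriv (fdet N E) = (\<Sum>p\<in>?P. signof p * fps_deriv (\<Prod>i=0..<N. E i (p i)))"
    unfolding fdet_def' by (simp add: fps_deriv_sum)
  also have "\<dots> = (\<Sum>p\<in>?P. \<Sum>i=0..<N. signof p * (fd E i (p i) * (\<Prod>a\<in>{0..<N}-{i}. E a (p a))))"
    by (simp add: fps_deriv_prod sum_distrib_left fd_def)
  also have "\<dots> = (\<Sum>i=0..<N. \<Sum>p\<in>?P. signof p * (fd E i (p i) * (\<Prod>a\<in>{0..<N}-{i}. E a (p a))))"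
    by (rule sum.swap)
  also have "\<dots> = (\<Sum>i=0..<N. fdet N (\<lambda>a b. if a = i then fd E a b else E a b))"
  proof (intro sum.cong refl)
    fix i assume i: "i \<in> {0..<N}"
    show "(\<Sum>p\<in>?P. signof p * (fd E i (p i) * (\<Prod>a\<in>{0..<N}-{i}. E a (p a))))
        = fdet N (\<lambda>a b. if a = i then fd E a b else E a b)"
      unfolding fdet_def'
    proof (intro sum.cong refl arg_cong2[where f="(*)"])
      fix p
      have "(\<Prod>a=0..<N. (if a = i then fd E a (p a) else E a (p a)))
          = (if i = i then fd E i (p i) else E i (p i)) * (\<Prod>a\<in>{0..<N}-{i}. (if a = i then fd E a (p a) else E a (p a)))"
        using i by (intro prod.remove) auto
      also have "(\<Prod>a\<in>{0..<N}-{i}. (if a = i then fd E a (p a) else E a (p a))) = (\<Prod>a\<in>{0..<N}-{i}. E a (p a))"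
        by (intro prod.cong) auto
      finally show "fd E i (p i) * (\<Prod>a\<in>{0..<N}-{i}. E a (p a)) = (\<Prod>a=0..<N. (if a = i then fd E a (p a) else E a (p a)))"
        by simp
    qed
  qed
  also have "\<dots> = (\<Sum>i=0..<N. \<Sum>j<N. fd E i j * cof N E i j)"
  proof (intro sum.cong refl)
    fix i assume i: "i \<in> {0..<N}"
    have "fdet N (\<lambda>a b. if a = i then fd E a b else E a b)
        = (\<Sum>j<N. mat N N (\<lambda>(a,b). if a = i then fd E a b else E a b) $$ (i,j) * cof N (\<lambda>a b. if a = i then fd E a b else E a b) i j)"
      unfolding fdet_def cof_def by (rule laplace_expansion_row) (use i in auto)
    also have "\<dots> = (\<Sum>j<N. fd E i j * cof N E i j)"
      using i by (intro sum.cong refl) (simp add: cof_replace_row)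
    finally show "fdet N (\<lambda>a b. if a = i then fd E a b else E a b) = (\<Sum>j<N. fd E i j * cof N E i j)" .
  qed
  finally show ?thesis by (simp add: atLeast0LessThan)
qed

lemma adj_prop:
  fixes E :: "nat \<Rightarrow> nat \<Rightarrow> 'b::comm_ring_1"
  assumes "i < N" "j < N"
  shows "(\<Sum>k<N. cof N E k i * E k j) = (if i = j then fdet N E else 0)"
proof -
  let ?A = "mat N N (\<lambda>(i,j). E i j)"
  have A: "?A \<in> carrier_mat N N" by simp
  have "(adj_mat ?A * ?A) $$ (i,j) = (fdet N E \<cdot>\<^sub>m 1\<^sub>m N) $$ (i,j)"
    using adj_mat(3)[OF A] by (simp add: fdet_def)
  moreover have "(adj_mat ?A * ?A) $$ (i,j) = (\<Sum>k<N. cof N E k i * E k j)"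
    using assms adj_mat(1)[OF A]
    by (auto simp: scalar_prod_def adj_mat_def cof_def atLeast0LessThan intro!: sum.cong)
  moreover have "(fdet N E \<cdot>\<^sub>m 1\<^sub>m N) $$ (i,j) = (if i = j then fdet N E else 0)"
    using assms by simp
  ultimately show ?thesis by simp
qed



definition low :: "nat \<Rightarrow> nat \<Rightarrow> (nat \<Rightarrow> nat \<Rightarrow> 'b::comm_ring_1 fps) \<Rightarrow> bool" where
  "low N K X \<longleftrightarrow> (\<forall>i<N. \<forall>j<N. \<forall>m<K. fps_nth (X i j) m = 0)"

lemma fps_mult_low:
  fixes f g :: "'b::comm_ring_1 fps"
  assumes "\<And>m. m < a \<Longrightarrow> fps_nth f m = 0" "\<And>m. m < b \<Longrightarrow> fps_nth g m = 0" "m < a + b"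
  shows "fps_nth (f * g) m = 0"
  unfolding fps_mult_nth
proof (rule sum.neutral, intro ballI)
  fix i assume im: "i \<in> {0..m}"
  show "fps_nth f i * fps_nth g (m - i) = 0"
  proof (cases "i < a")
    case True then show ?thesis using assms(1) by simp
  next
    case False
    then have "m - i < b" using assms(3) im by auto
    then show ?thesis using assms(2) by simp
  qed
qed

lemma low_mm: "low N a X \<Longrightarrow> low N b Y \<Longrightarrow> low N (a + b) (mm N X Y)"
  unfolding low_def mm_def
proof (intro allI impI)
  fix i j m assume X: "\<forall>i<N. \<forall>j<N. \<forall>m<a. fps_nth (X i j) m = 0"
    and Y: "\<forall>i<N. \<forall>j<N. \<forall>m<b. fps_nth (Y i j) m = 0" and ij: "i < N" "j < N" and m: "m < a + b"
  have "fps_nth (X i k * Y k j) m = 0" if "k < N" for k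
    by (rule fps_mult_low[of a _ b]) (use X Y ij that m in auto)
  then show "fps_nth (\<Sum>k<N. X i k * Y k j) m = 0" by (simp add: fps_sum_nth)
qed

lemma low_0: "low N 0 X" unfolding low_def by simp

lemma low_pow: "low N 1 A \<Longrightarrow> low N l (mpow N A l)"
proof (induction l)
  case 0 then show ?case by (simp add: low_0)
next
  case (Suc l)
  then show ?case using low_mm[of N l "mpow N A l" 1 A] by simp
qed

lemma low_tr: "low N K X \<Longrightarrow> m < K \<Longrightarrow> fps_nth (tr N X) m = 0"
  unfolding low_def tr_def by (simp add: fps_sum_nth)

interpretation c0: comm_ring_hom "\<lambda>f::'b::comm_ring_1 fps. fps_nth f 0"
  by unfold_locales (auto simp: fps_mult_nth)

lemma fdet_nth0:
  fixes E :: "nat \<Rightarrow> nat \<Rightarrow> 'b::comm_ring_1 fps"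
  shows "fps_nth (fdet N E) 0 = fdet N (\<lambda>i j. fps_nth (E i j) 0)"
proof -
  have "fps_nth (fdet N E) 0 = det (map_mat (\<lambda>f. fps_nth f 0) (mat N N (\<lambda>(i,j). E i j)))"
    unfolding fdet_def by (rule c0.hom_det[symmetric])
  also have "map_mat (\<lambda>f. fps_nth f 0) (mat N N (\<lambda>(i,j). E i j)) = mat N N (\<lambda>(i,j). fps_nth (E i j) 0)"
    by (rule eq_matI) auto
  finally show ?thesis unfolding fdet_def .
qed

lemma fdet_idm: "fdet N (idm :: nat \<Rightarrow> nat \<Rightarrow> 'b::comm_ring_1) = 1"
proof -
  have "mat N N (\<lambda>(i,j). (idm i j :: 'b)) = 1\<^sub>m N"
    by (rule eq_matI) (auto simp: idm_def)
  then show ?thesis unfolding fdet_def by simp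
qed

lemma fps_unique_low:
  fixes B D :: "real fps"
  assumes B0: "fps_nth B 0 = 1" and h: "\<And>m. m < K \<Longrightarrow> fps_nth (D * B) m = 0"
  shows "m < K \<Longrightarrow> fps_nth D m = 0"
proof (induction m rule: less_induct)
  case (less m)
  have "fps_nth (D * B) m = (\<Sum>i=0..m. fps_nth D i * fps_nth B (m - i))" by (rule fps_mult_nth)
  also have "\<dots> = (\<Sum>i\<in>{0..<m}. fps_nth D i * fps_nth B (m - i)) + fps_nth D m * fps_nth B 0"
    by (simp add: atLeast0AtMost atLeast0LessThan lessThan_Suc_atMost[symmetric])
  also have "(\<Sum>i\<in>{0..<m}. fps_nth D i * fps_nth B (m - i)) = 0"
    using less by (intro sum.neutral) auto
  finally show ?case using h[OF less.prems] B0 by simp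
qed

theorem logdet:
  fixes A :: "nat \<Rightarrow> nat \<Rightarrow> real fps"
  assumes A0: "low N 1 A"
  shows "fps_nth (fps_ln 1 oo (fdet N (\<lambda>i j. idm i j + A i j) - 1)) n
       = (\<Sum>l\<in>{1..n}. (-1)^(l+1) / real l * fps_nth (tr N (mpow N A l)) n)"
proof -
  define E where "E = (\<lambda>i j. idm i j + A i j)"
  define B where "B = fdet N E"
  define \<Lambda> where "\<Lambda> = fps_ln 1 oo (B - 1)"
  define C where "C = (\<lambda>i j. cof N E j i)"
  define t where "t = (\<lambda>l. tr N (mm N (fd A) (mm N C (mpow N A l))))"
  define T where "T = (\<lambda>l. tr N (mm N (fd A) (mpow N A l)))"
  define L where "L = (\<lambda>K. \<Sum>l\<in>{1..K}. fps_const ((-1)^(l+1) / real l) * tr N (mpow N A l))"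
  have E0: "fps_nth (E i j) 0 = idm i j" if "i < N" "j < N" for i j
    using A0 that unfolding low_def E_def idm_def by auto
  have B0: "fps_nth B 0 = 1"
  proof -
    have "fps_nth B 0 = fdet N (\<lambda>i j. fps_nth (E i j) 0)" unfolding B_def by (rule fdet_nth0)
    also have "\<dots> = fdet N (idm :: nat \<Rightarrow> nat \<Rightarrow> real)"
      unfolding fdet_def using E0 by (intro arg_cong[where f=det] eq_matI) auto
    finally show ?thesis by (simp add: fdet_idm)
  qed
  have Bm0: "fps_nth (B - 1) 0 = 0" using B0 by simp
  have comp1: "(1 + fps_X) oo (B - 1) = B"
    using Bm0 by (simp add: fps_compose_add_distrib)
  have dL: "fps_deriv \<Lambda> * B = fps_deriv B"
  proof -
    have "fps_deriv \<Lambda> = (fps_deriv (fps_ln 1) oo (B - 1)) * fps_deriv (B - 1)"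
      unfolding \<Lambda>_def by (rule fps_compose_deriv[OF Bm0])
    also have "fps_deriv (fps_ln (1::real)) = inverse (1 + fps_X)" by (simp add: fps_ln_deriv)
    also have "inverse (1 + fps_X) oo (B - 1) = inverse ((1 + fps_X) oo (B - 1))"
      by (rule fps_inverse_compose[OF Bm0]) simp
    finally have "fps_deriv \<Lambda> = inverse B * fps_deriv B" by (simp add: comp1)
    then show ?thesis using inverse_mult_eq_1[of B] B0 by (simp add: algebra_simps)
  qed
  have dtr: "fps_deriv (tr N (mpow N A (Suc l))) = of_nat (Suc l) * T l" for l
  proof -
    have "fps_deriv (tr N (mpow N A (Suc l))) = tr N (fd (mpow N A (Suc l)))" by (rule tr_fd)
    also have "\<dots> = tr N (mm N (fd (mpow N A (Suc l))) (mpow N A 0))"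
      by (intro tr_cong) (simp add: mm_idm_right)
    also have "\<dots> = of_nat (Suc l) * T l" unfolding T_def by (subst tr_fd_pow) simp
    finally show ?thesis .
  qed
  have dLK: "fps_deriv (L K) = (\<Sum>l<K. fps_const ((-1)^l) * T l)" for K
  proof -
    have "fps_deriv (L K) = (\<Sum>l\<in>{1..K}. fps_const ((-1)^(l+1) / real l) * fps_deriv (tr N (mpow N A l)))"
      unfolding L_def by (simp add: fps_deriv_sum)
    also have "\<dots> = (\<Sum>l<K. fps_const ((-1)^(Suc l+1) / real (Suc l)) * fps_deriv (tr N (mpow N A (Suc l))))"
      using sum.atLeast1_atMost_eq[of "\<lambda>l. fps_const ((-1)^(l+1) / real l) * fps_deriv (tr N (mpow N A l))" K]
      by simp
    also have "\<dots> = (\<Sum>l<K. fps_const ((-1)^l) * T l)"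
    proof (intro sum.cong refl)
      fix l
      have "fps_const ((-1)^(Suc l+1) / real (Suc l)) * (of_nat (Suc l) :: real fps) = fps_const ((-1)^l)"
      proof -
        have "(of_nat (Suc l) :: real fps) = fps_const (real (Suc l))" by (simp only: fps_of_nat)
        then show ?thesis by (simp del: of_nat_Suc)
      qed
      then show "fps_const ((-1)^(Suc l+1) / real (Suc l)) * fps_deriv (tr N (mpow N A (Suc l))) = fps_const ((-1)^l) * T l"
        by (simp only: dtr mult.assoc[symmetric])
    qed
    finally show ?thesis .
  qed
  have CE: "mm N C E i j = (if i = j then B else 0)" if "i < N" "j < N" for i j
    unfolding mm_def C_def B_def using adj_prop[OF that, of E] by simp
  have EM: "mm N E (mpow N A l) i j = mpow N A l i j + mpow N A (Suc l) i j" if "i < N" "j < N" for i j l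
  proof -
    have "mm N E (mpow N A l) i j = mm N idm (mpow N A l) i j + mm N A (mpow N A l) i j"
      unfolding E_def by (simp add: mm_add_left)
    also have "\<dots> = mpow N A l i j + mpow N A (Suc l) i j"
      using that by (simp add: mm_idm_left mpow_Suc_left del: mpow.simps(2))
    finally show ?thesis .
  qed
  have Bstep: "B * T l = t l + t (Suc l)" for l
  proof -
    have "B * T l = tr N (mm N (fd A) (\<lambda>i j. B * mpow N A l i j))"
      unfolding T_def by (simp add: mm_smult_right tr_smult)
    also have "\<dots> = tr N (mm N (fd A) (\<lambda>i j. mm N C (mpow N A l) i j + mm N C (mpow N A (Suc l)) i j))"
    proof (intro tr_cong mm_cong_right)
      fix i j assume ij: "i < N" "j < N"
      have "B * mpow N A l i j = mm N (mm N C E) (mpow N A l) i j"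
      proof -
        have "mm N (mm N C E) (mpow N A l) i j = (\<Sum>k<N. (if i = k then B else 0) * mpow N A l k j)"
          unfolding mm_def[of N "mm N C E"] using ij CE by (intro sum.cong) auto
        also have "\<dots> = (\<Sum>k<N. if k = i then B * mpow N A l k j else 0)"
          by (intro sum.cong) auto
        also have "\<dots> = B * mpow N A l i j" using ij by simp
        finally show ?thesis by simp
      qed
      also have "\<dots> = mm N C (mm N E (mpow N A l)) i j" by (simp only: mm_assoc)
      also have "\<dots> = mm N C (\<lambda>i j. mpow N A l i j + mpow N A (Suc l) i j) i j"
        by (rule mm_cong_right) (use ij EM in auto)
      also have "\<dots> = mm N C (mpow N A l) i j + mm N C (mpow N A (Suc l)) i j"
        by (simp add: mm_add_right)
      finally show "B * mpow N A l i j = mm N C (mpow N A l) i j + mm N C (mpow N A (Suc l)) i j" .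
    qed
    also have "\<dots> = t l + t (Suc l)"
      unfolding t_def by (simp add: mm_add_right tr_add)
    finally show ?thesis .
  qed
  have tele: "B * fps_deriv (L K) = t 0 - fps_const ((-1)^K) * t K" for K
  proof (induction K)
    case 0 then show ?case by (simp add: dLK)
  next
    case (Suc K)
    have "B * fps_deriv (L (Suc K)) = B * fps_deriv (L K) + fps_const ((-1)^K) * (B * T K)"
      by (simp add: dLK algebra_simps)
    also have "\<dots> = t 0 - fps_const ((-1)^Suc K) * t (Suc K)"
      by (simp only: Suc Bstep) (simp add: algebra_simps fps_const_neg[symmetric] del: fps_const_neg)
    finally show ?case .
  qed
  have t0: "t 0 = fps_deriv B"
  proof -
    have "t 0 = (\<Sum>i<N. \<Sum>j<N. fd A i j * cof N E i j)"
    proof -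
      have "t 0 = tr N (mm N (fd A) C)"
        unfolding t_def by (intro tr_cong mm_cong_right) (simp add: mm_idm_right)
      also have "\<dots> = (\<Sum>i<N. \<Sum>j<N. fd A i j * cof N E i j)"
        unfolding tr_def mm_def C_def ..
      finally show ?thesis .
    qed
    also have "\<dots> = (\<Sum>i<N. \<Sum>j<N. fd E i j * cof N E i j)"
      unfolding fd_def E_def idm_def by (intro sum.cong refl) auto
    also have "\<dots> = fps_deriv B" unfolding B_def by (rule jacobi[symmetric])
    finally show ?thesis .
  qed
  have lowt: "fps_nth (t K) m = 0" if "m < K" for K m
  proof -
    have "low N (0 + (0 + K)) (mm N (fd A) (mm N C (mpow N A K)))"
      by (intro low_mm low_0 low_pow A0)
    then show ?thesis unfolding t_def using low_tr that by simp
  qed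
  have agree: "fps_nth (L K) m = fps_nth \<Lambda> m" if "m \<le> K" for K m
  proof -
    have "fps_nth (fps_deriv (L K) - fps_deriv \<Lambda>) m = 0" if "m < K" for m
    proof (rule fps_unique_low[OF B0 _ that])
      fix m assume m: "m < K"
      have "(fps_deriv (L K) - fps_deriv \<Lambda>) * B = B * fps_deriv (L K) - fps_deriv \<Lambda> * B"
        by (simp add: algebra_simps)
      also have "\<dots> = - (fps_const ((-1)^K) * t K)"
        by (simp add: tele t0 dL)
      finally show "fps_nth ((fps_deriv (L K) - fps_deriv \<Lambda>) * B) m = 0"
        using lowt[OF m] by simp
    qed
    then have d: "fps_nth (L K) (Suc m) = fps_nth \<Lambda> (Suc m)" if "m < K" for m
      using that by (simp del: of_nat_Suc)
    show ?thesis
    proof (cases m)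
      case 0
      have "fps_nth (tr N (mpow N A l)) 0 = 0" if "l \<in> {1..K}" for l
        using low_tr[OF low_pow[OF A0, of l]] that by simp
      then have "fps_nth (L K) 0 = 0" unfolding L_def by (simp add: fps_sum_nth)
      moreover have "fps_nth \<Lambda> 0 = 0" unfolding \<Lambda>_def by simp
      ultimately show ?thesis using 0 by simp
    next
      case (Suc m') then show ?thesis using d[of m'] that by simp
    qed
  qed
  have "fps_nth \<Lambda> n = fps_nth (L n) n" using agree[of n n] by simp
  also have "\<dots> = (\<Sum>l\<in>{1..n}. (-1)^(l+1) / real l * fps_nth (tr N (mpow N A l)) n)"
    unfolding L_def by (simp add: fps_sum_nth)
  finally show ?thesis unfolding \<Lambda>_def B_def E_def .
qed



context ens
begin

abbreviation "TT \<equiv> PiM {..<N} (\<lambda>_. \<mu>)"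
abbreviation "Perm \<equiv> {p. p permutes {0..<N}}"

definition Dd :: "(nat \<Rightarrow> real) \<Rightarrow> real" where
  "Dd x = det (Matrix.mat N N (\<lambda>(i, j). biorth_kernel P Q N (x i) (x j)))"

lemma Dexp: "Dd x = (\<Sum>\<sigma>\<in>Perm. \<Sum>\<tau>\<in>Perm. signof \<sigma> * signof \<tau> * (\<Prod>i<N. P (\<sigma> i) (x i) * Q (\<tau> i) (x i)))"
proof -
  define PM where "PM = mat N N (\<lambda>(i,k). P k (x i))"
  define QM where "QM = mat N N (\<lambda>(j,k). Q k (x j))"
  have PMc: "PM \<in> carrier_mat N N" and QMc: "QM \<in> carrier_mat N N" by (auto simp: PM_def QM_def)
  have eq: "mat N N (\<lambda>(i, j). biorth_kernel P Q N (x i) (x j)) = PM * transpose_mat QM"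
    by (rule eq_matI) (auto simp: PM_def QM_def scalar_prod_def biorth_kernel_def atLeast0LessThan)
  have dP: "det PM = (\<Sum>\<sigma>\<in>Perm. signof \<sigma> * (\<Prod>i<N. P (\<sigma> i) (x i)))"
  proof -
    have "det PM = (\<Sum>\<sigma>\<in>Perm. signof \<sigma> * (\<Prod>i=0..<N. PM $$ (i, \<sigma> i)))" by (rule det_def'[OF PMc])
    also have "\<dots> = (\<Sum>\<sigma>\<in>Perm. signof \<sigma> * (\<Prod>i<N. P (\<sigma> i) (x i)))"
    proof (intro sum.cong refl arg_cong2[where f="(*)"])
      fix \<sigma> assume s: "\<sigma> \<in> Perm"
      show "(\<Prod>i=0..<N. PM $$ (i, \<sigma> i)) = (\<Prod>i<N. P (\<sigma> i) (x i))"
        unfolding atLeast0LessThan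
      proof (intro prod.cong refl)
        fix i assume i: "i \<in> {..<N}"
        then have "\<sigma> i < N" using s by (auto dest: permutes_in_image)
        then show "PM $$ (i, \<sigma> i) = P (\<sigma> i) (x i)" using i by (simp add: PM_def)
      qed
    qed
    finally show ?thesis .
  qed
  have dQ: "det QM = (\<Sum>\<tau>\<in>Perm. signof \<tau> * (\<Prod>i<N. Q (\<tau> i) (x i)))"
  proof -
    have "det QM = (\<Sum>\<tau>\<in>Perm. signof \<tau> * (\<Prod>i=0..<N. QM $$ (i, \<tau> i)))" by (rule det_def'[OF QMc])
    also have "\<dots> = (\<Sum>\<tau>\<in>Perm. signof \<tau> * (\<Prod>i<N. Q (\<tau> i) (x i)))"
    proof (intro sum.cong refl arg_cong2[where f="(*)"])
      fix \<tau> assume s: "\<tau> \<in> Perm"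
      show "(\<Prod>i=0..<N. QM $$ (i, \<tau> i)) = (\<Prod>i<N. Q (\<tau> i) (x i))"
        unfolding atLeast0LessThan
      proof (intro prod.cong refl)
        fix i assume i: "i \<in> {..<N}"
        then have "\<tau> i < N" using s by (auto dest: permutes_in_image)
        then show "QM $$ (i, \<tau> i) = Q (\<tau> i) (x i)" using i by (simp add: QM_def)
      qed
    qed
    finally show ?thesis .
  qed
  have "det (PM * transpose_mat QM) = det PM * det (transpose_mat QM)"
    by (rule det_mult) (use PMc QMc in auto)
  then have "Dd x = det PM * det QM"
    unfolding Dd_def eq by (simp add: det_transpose[OF QMc])
  also have "\<dots> = (\<Sum>\<sigma>\<in>Perm. \<Sum>\<tau>\<in>Perm. signof \<sigma> * signof \<tau> * (\<Prod>i<N. P (\<sigma> i) (x i) * Q (\<tau> i) (x i)))"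
    unfolding dP dQ sum_product by (simp add: prod.distrib algebra_simps)
  finally show ?thesis .
qed

lemma psf: "product_sigma_finite (\<lambda>_. \<mu>)"
  unfolding product_sigma_finite_def using sf by simp

lemma andreief:
  fixes c :: "nat \<Rightarrow> nat"
  shows "integrable TT (\<lambda>x. (\<Prod>i<N. poly F (x i) ^ c i) * Dd x)"
    and "(\<integral>x. (\<Prod>i<N. poly F (x i) ^ c i) * Dd x \<partial>TT)
        = (\<Sum>\<sigma>\<in>Perm. \<Sum>\<tau>\<in>Perm. signof \<sigma> * signof \<tau> * (\<Prod>i<N. Mp (c i) (\<sigma> i) (\<tau> i)))"
proof -
  interpret product_sigma_finite "\<lambda>_. \<mu>" by (rule psf)
  define h where "h = (\<lambda>\<sigma> \<tau> i y. poly F y ^ c i * P (\<sigma> i) y * Q (\<tau> i) y)"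
  have eq: "(\<Prod>i<N. poly F (x i) ^ c i) * Dd x
      = (\<Sum>\<sigma>\<in>Perm. \<Sum>\<tau>\<in>Perm. signof \<sigma> * signof \<tau> * (\<Prod>i<N. h \<sigma> \<tau> i (x i)))" for x
    unfolding Dexp h_def by (simp add: sum_distrib_left prod.distrib algebra_simps)
  have hi: "integrable \<mu> (h \<sigma> \<tau> i)" for \<sigma> \<tau> i
    unfolding h_def by (rule int_Fpow(1))
  have hI: "integral\<^sup>L \<mu> (h \<sigma> \<tau> i) = Mp (c i) (\<sigma> i) (\<tau> i)" for \<sigma> \<tau> i
    unfolding h_def by (rule int_Fpow(2))
  have pint: "integrable TT (\<lambda>x. \<Prod>i<N. h \<sigma> \<tau> i (x i))" for \<sigma> \<tau>
    by (rule product_integrable_prod) (auto simp: hi)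
  have pI: "(\<integral>x. (\<Prod>i<N. h \<sigma> \<tau> i (x i)) \<partial>TT) = (\<Prod>i<N. Mp (c i) (\<sigma> i) (\<tau> i))" for \<sigma> \<tau>
    by (subst product_integral_prod) (auto simp: hi hI)
  show "integrable TT (\<lambda>x. (\<Prod>i<N. poly F (x i) ^ c i) * Dd x)"
    unfolding eq by (simp add: pint)
  show "(\<integral>x. (\<Prod>i<N. poly F (x i) ^ c i) * Dd x \<partial>TT)
        = (\<Sum>\<sigma>\<in>Perm. \<Sum>\<tau>\<in>Perm. signof \<sigma> * signof \<tau> * (\<Prod>i<N. Mp (c i) (\<sigma> i) (\<tau> i)))"
    unfolding eq by (simp add: integral_sum integrable_sum integrable_mult_right pint pI)
qed

end


lemma fps_nth_of_int_mult: "fps_nth (of_int c * X) m = of_int c * fps_nth (X :: 'b::comm_ring_1 fps) m"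
  by (simp flip: fps_of_int)

lemma fps_nth_of_nat_mult: "fps_nth (of_nat c * X) m = of_nat c * fps_nth (X :: 'b::comm_ring_1 fps) m"
  by (simp flip: fps_of_nat)

lemma fdet_transpose: "fdet N E = fdet N (\<lambda>i j. E j i)"
proof -
  have "transpose_mat (mat N N (\<lambda>(i,j). E i j)) = mat N N (\<lambda>(i,j). E j i)"
    by (rule eq_matI) auto
  then show ?thesis unfolding fdet_def
    by (metis det_transpose mat_carrier)
qed

context ens
begin

lemma Mp0: "Mp 0 = idm"
  unfolding Mp_def idm_def by (intro ext) simp

lemma int_Dd: "integrable TT Dd" "(\<integral>x. Dd x \<partial>TT) = fact N"
proof -
  have e: "(\<lambda>x. (\<Prod>i<N. poly F (x i) ^ (0::nat)) * Dd x) = Dd" by (intro ext) simp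
  show "integrable TT Dd" using andreief(1)[of "\<lambda>_. 0"] unfolding e .
  have "(\<integral>x. Dd x \<partial>TT) = (\<Sum>\<sigma>\<in>Perm. \<Sum>\<tau>\<in>Perm. signof \<sigma> * signof \<tau> * (\<Prod>i<N. Mp 0 (\<sigma> i) (\<tau> i)))"
    using andreief(2)[of "\<lambda>_. 0"] unfolding e .
  also have "\<dots> = of_nat (fact N) * fdet N (idm :: nat \<Rightarrow> nat \<Rightarrow> real)"
    unfolding Mp0 fdet_def using double_perm_det[of "idm :: nat \<Rightarrow> nat \<Rightarrow> real" N]
    by (simp add: atLeast0LessThan)
  finally show "(\<integral>x. Dd x \<partial>TT) = fact N" by (simp add: fdet_idm)
qed

lemma Dd_meas: "Dd \<in> borel_measurable TT"
  using int_Dd(1) by (rule borel_measurable_integrable)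

lemma distr': "distributed S TT \<xi> (\<lambda>x. ennreal (Dd x / fact N))"
  using distr unfolding Dd_def .

lemma Dd_nonneg: "AE x in TT. 0 \<le> Dd x"
proof -
  interpret S: prob_space S by (rule prob)
  define g where "g = (\<lambda>x. max (Dd x / fact N) 0)"
  have fN: "fact N > (0::real)" by simp
  have gD: "g x = (Dd x / fact N + \<bar>Dd x / fact N\<bar>) / 2" for x
  proof (cases "Dd x \<ge> 0")
    case True
    then have "Dd x / fact N \<ge> 0" using fN by simp
    then have "\<bar>Dd x / fact N\<bar> = Dd x / fact N" using True by simp
    then show ?thesis unfolding g_def using \<open>Dd x / fact N \<ge> 0\<close> by (simp only: max_absorb1) simp
  next
    case False
    then have "Dd x / fact N < 0" using fN by (simp add: divide_neg_pos)
    moreover have "\<bar>Dd x\<bar> = - Dd x" using False by simp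
    ultimately show ?thesis unfolding g_def by (simp add: max_def)
  qed
  have gi: "integrable TT g" unfolding gD using int_Dd(1) by simp
  have meas: "\<xi> \<in> measurable S TT" using distributed_measurable[OF distr'] .
  have "emeasure (density TT (\<lambda>x. ennreal (Dd x / fact N))) (space TT) = emeasure (distr S TT \<xi>) (space TT)"
    using distributed_distr_eq_density[OF distr'] by simp
  also have "\<dots> = emeasure S (\<xi> -` space TT \<inter> space S)"
    by (rule emeasure_distr[OF meas]) simp
  also have "\<xi> -` space TT \<inter> space S = space S" using meas by (auto simp: measurable_def)
  also have "emeasure S (space S) = 1" by (rule S.emeasure_space_1)
  finally have "emeasure (density TT (\<lambda>x. ennreal (Dd x / fact N))) (space TT) = 1" .
  moreover have "emeasure (density TT (\<lambda>x. ennreal (Dd x / fact N))) (space TT) = (\<integral>\<^sup>+ x. ennreal (g x) \<partial>TT)"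
  proof -
    have "emeasure (density TT (\<lambda>x. ennreal (Dd x / fact N))) (space TT)
        = (\<integral>\<^sup>+ x. ennreal (Dd x / fact N) * indicator (space TT) x \<partial>TT)"
      by (rule emeasure_density) (use Dd_meas in auto)
    also have "\<dots> = (\<integral>\<^sup>+ x. ennreal (g x) \<partial>TT)"
      by (intro nn_integral_cong) (auto simp: g_def ennreal_max_0)
    finally show ?thesis .
  qed
  moreover have "(\<integral>\<^sup>+ x. ennreal (g x) \<partial>TT) = ennreal (integral\<^sup>L TT g)"
    by (rule nn_integral_eq_integral[OF gi]) (auto simp: g_def)
  ultimately have ig: "integral\<^sup>L TT g = 1"
    by (metis ennreal_1 ennreal_inj integral_nonneg_AE g_def max.cobounded2 AE_I2 zero_le_one)
  have "(\<integral>x. Dd x / fact N \<partial>TT) = 1" using int_Dd(2) by simp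
  then have "(\<integral>x. g x - Dd x / fact N \<partial>TT) = 0"
    using ig gi int_Dd fN by (simp add: integral_diff)
  moreover have "integrable TT (\<lambda>x. g x - Dd x / fact N)" using gi int_Dd(1) by simp
  moreover have "AE x in TT. 0 \<le> g x - Dd x / fact N" by (auto simp: g_def)
  ultimately have "AE x in TT. g x - Dd x / fact N = 0"
    using integral_nonneg_eq_0_iff_AE by blast
  then show ?thesis
  proof eventually_elim
    case (elim x)
    then have "Dd x / fact N \<ge> 0" unfolding g_def by (metis eq_iff_diff_eq_0 max.cobounded2)
    then show ?case using fN by (simp add: zero_le_divide_iff)
  qed
qed

lemma expect_transfer:
  assumes G: "G \<in> borel_measurable TT"
  shows "(\<integral>\<omega>. G (\<xi> \<omega>) \<partial>S) = (\<integral>x. (Dd x / fact N) * G x \<partial>TT)"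
proof -
  have meas: "\<xi> \<in> measurable S TT" using distributed_measurable[OF distr'] .
  have "(\<integral>\<omega>. G (\<xi> \<omega>) \<partial>S) = integral\<^sup>L (distr S TT \<xi>) G"
    by (rule integral_distr[OF meas G, symmetric])
  also have "\<dots> = integral\<^sup>L (density TT (\<lambda>x. ennreal (Dd x / fact N))) G"
    using distributed_distr_eq_density[OF distr'] by simp
  also have "\<dots> = (\<integral>x. (Dd x / fact N) *\<^sub>R G x \<partial>TT)"
  proof -
    have ae: "AE x in TT. 0 \<le> Dd x / fact N" using Dd_nonneg by eventually_elim simp
    have gm: "(\<lambda>x. Dd x / fact N) \<in> borel_measurable TT" using Dd_meas by simp
    show ?thesis by (rule integral_density[OF G gm ae])
  qed
  finally show ?thesis by simp
qed

end


context ens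
begin

definition "Xs = (\<lambda>\<omega>. \<Sum>k<N. poly F (\<xi> \<omega> k))"
definition "ef = (\<lambda>a b. Abs_fps (\<lambda>j. Mp j a b / fact j))"
definition "Am = (\<lambda>i j. Abs_fps (\<lambda>k. if k = 0 then 0 else Mp k j i / fact k))"

lemma polyF_meas: "poly F \<in> borel_measurable \<mu>"
proof -
  have "poly F \<in> borel_measurable borel"
    by (rule borel_measurable_continuous_onI) (intro continuous_intros)
  moreover have "borel_measurable \<mu> = (borel_measurable borel :: (real \<Rightarrow> real) set)"
    by (rule measurable_cong_sets[OF sets_mu]) simp
  ultimately show ?thesis by simp
qed

lemma G_meas: "(\<lambda>x. \<Prod>k<N. poly F (x k) ^ c k) \<in> borel_measurable TT"
    "(\<lambda>x. (\<Sum>k<N. poly F (x k)) ^ m) \<in> borel_measurable TT"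
proof -
  have comp: "(\<lambda>x. poly F (x k)) \<in> borel_measurable TT" if "k < N" for k
    using measurable_compose[OF measurable_component_singleton[of k "{..<N}" "\<lambda>_. \<mu>"] polyF_meas] that
    by simp
  show "(\<lambda>x. \<Prod>k<N. poly F (x k) ^ c k) \<in> borel_measurable TT"
    using comp by (intro borel_measurable_prod borel_measurable_power) auto
  show "(\<lambda>x. (\<Sum>k<N. poly F (x k)) ^ m) \<in> borel_measurable TT"
    using comp by (intro borel_measurable_sum borel_measurable_power) auto
qed

lemma pow_expand:
  "(\<Sum>k<N. y k) ^ m / fact m = (\<Sum>c\<in>comps {..<N} m. \<Prod>k<N. (y k :: real) ^ c k / fact (c k))"
proof -
  have "(\<Sum>k<N. y k) ^ m / fact m = fps_nth (fps_exp (\<Sum>k<N. y k)) m" by simp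
  also have "\<dots> = fps_nth (\<Prod>k<N. fps_exp (y k)) m" by (simp add: fps_exp_sum)
  also have "\<dots> = (\<Sum>c\<in>comps {..<N} m. \<Prod>k<N. fps_nth (fps_exp (y k)) (c k))"
    by (rule prod_fps_nth) simp
  finally show ?thesis by simp
qed

definition "Ssum m = (\<Sum>\<sigma>\<in>Perm. \<Sum>\<tau>\<in>Perm. signof \<sigma> * signof \<tau> *
     (\<Sum>c\<in>comps {..<N} m. \<Prod>k<N. Mp (c k) (\<sigma> k) (\<tau> k) / fact (c k)))"

lemma moment_calc: "(\<integral>\<omega>. Xs \<omega> ^ m \<partial>S) = fact m / fact N * Ssum m"
proof -
  define h where "h = (\<lambda>c x. (\<Prod>k<N. poly F (x k) ^ c k) * Dd x)"
  define w where "w = (\<lambda>c. (\<Prod>k<N. 1 / fact (c k)) :: real)"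
  have hint: "integrable TT (h c)" for c unfolding h_def by (rule andreief(1))
  have pw: "(Dd x / fact N) * (\<Sum>k<N. poly F (x k)) ^ m
      = (\<Sum>c\<in>comps {..<N} m. (fact m / fact N * w c) * h c x)" for x
  proof -
    have "(\<Sum>k<N. poly F (x k)) ^ m = fact m * (\<Sum>c\<in>comps {..<N} m. \<Prod>k<N. poly F (x k) ^ c k / fact (c k))"
      using pow_expand[of "\<lambda>k. poly F (x k)" m] by (simp add: field_simps)
    also have "\<dots> = fact m * (\<Sum>c\<in>comps {..<N} m. w c * (\<Prod>k<N. poly F (x k) ^ c k))"
      unfolding w_def by (simp add: prod.distrib[symmetric])
    finally show ?thesis unfolding h_def
      by (simp add: sum_distrib_left sum_distrib_right algebra_simps)
  qed
  have "(\<integral>\<omega>. Xs \<omega> ^ m \<partial>S) = (\<integral>x. (Dd x / fact N) * (\<Sum>k<N. poly F (x k)) ^ m \<partial>TT)"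
    unfolding Xs_def by (rule expect_transfer[OF G_meas(2)])
  also have "\<dots> = (\<integral>x. (\<Sum>c\<in>comps {..<N} m. (fact m / fact N * w c) * h c x) \<partial>TT)"
    by (simp only: pw)
  also have "\<dots> = (\<Sum>c\<in>comps {..<N} m. (fact m / fact N * w c) * integral\<^sup>L TT (h c))"
    by (simp add: integral_sum hint)
  also have "\<dots> = (\<Sum>c\<in>comps {..<N} m. (fact m / fact N * w c) *
      (\<Sum>\<sigma>\<in>Perm. \<Sum>\<tau>\<in>Perm. signof \<sigma> * signof \<tau> * (\<Prod>i<N. Mp (c i) (\<sigma> i) (\<tau> i))))"
    unfolding h_def by (simp add: andreief(2))
  also have "\<dots> = fact m / fact N * Ssum m"
    unfolding Ssum_def w_def
    by (simp add: sum_distrib_left sum_distrib_right prod_dividef algebra_simps sum.swap[of _ "comps {..<N} m"])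
  finally show ?thesis .
qed

lemma fdet_calc: "fps_nth (fdet N ef) m = Ssum m / fact N"
proof -
  have "of_nat (fact N) * fdet N ef = (\<Sum>\<sigma>\<in>Perm. \<Sum>\<tau>\<in>Perm. signof \<sigma> * signof \<tau> * (\<Prod>i=0..<N. ef (\<sigma> i) (\<tau> i)))"
    using double_perm_det[of ef N] unfolding fdet_def by simp
  then have "fps_nth (of_nat (fact N) * fdet N ef) m = fps_nth (\<Sum>\<sigma>\<in>Perm. \<Sum>\<tau>\<in>Perm. signof \<sigma> * signof \<tau> * (\<Prod>i=0..<N. ef (\<sigma> i) (\<tau> i))) m"
    by (rule arg_cong)
  then have "fact N * fps_nth (fdet N ef) m
      = (\<Sum>\<sigma>\<in>Perm. \<Sum>\<tau>\<in>Perm. of_int (sign \<sigma>) * (of_int (sign \<tau>) * fps_nth (\<Prod>i<N. ef (\<sigma> i) (\<tau> i)) m))"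
    by (simp only: fps_sum_nth fps_nth_of_nat_mult fps_nth_of_int_mult mult.assoc atLeast0LessThan) simp
  also have "\<dots> = Ssum m"
    unfolding Ssum_def
  proof (intro sum.cong refl)
    fix \<sigma> \<tau>
    have "fps_nth (\<Prod>i<N. ef (\<sigma> i) (\<tau> i)) m = (\<Sum>c\<in>comps {..<N} m. \<Prod>k<N. Mp (c k) (\<sigma> k) (\<tau> k) / fact (c k))"
      by (subst prod_fps_nth) (simp_all add: ef_def)
    then show "of_int (sign \<sigma>) * (of_int (sign \<tau>) * fps_nth (\<Prod>i<N. ef (\<sigma> i) (\<tau> i)) m)
        = signof \<sigma> * signof \<tau> * (\<Sum>c\<in>comps {..<N} m. \<Prod>k<N. Mp (c k) (\<sigma> k) (\<tau> k) / fact (c k))"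
      by simp
  qed
  finally show ?thesis by (simp add: field_simps)
qed

lemma moment_fps_eq: "moment_fps S Xs = fdet N ef"
proof (rule fps_ext)
  fix m
  show "fps_nth (moment_fps S Xs) m = fps_nth (fdet N ef) m"
    unfolding moment_fps_def using moment_calc[of m] fdet_calc[of m] by simp
qed

lemma ef_idm: "fdet N ef = fdet N (\<lambda>i j. idm i j + Am i j)"
proof -
  have "fdet N ef = fdet N (\<lambda>i j. ef j i)" by (rule fdet_transpose)
  also have "fdet N (\<lambda>i j. ef j i) = fdet N (\<lambda>i j. idm i j + Am i j)"
  proof (intro arg_cong[where f="fdet N"] ext fps_ext)
    fix i j k
    show "fps_nth (ef j i) k = fps_nth (idm i j + Am i j) k"
      by (cases k) (auto simp: ef_def Am_def Mp0 idm_def)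
  qed
  finally show ?thesis .
qed

lemma Am_low: "low N 1 Am"
  unfolding low_def Am_def by simp

lemma cumulant_trace:
  "cumulant S Xs n = fact n * (\<Sum>l\<in>{1..n}. (-1)^(l+1) / real l * fps_nth (tr N (mpow N Am l)) n)"
  unfolding cumulant_def moment_fps_eq ef_idm logdet[OF Am_low] ..

end


definition paths :: "nat \<Rightarrow> nat \<Rightarrow> nat \<Rightarrow> nat \<Rightarrow> nat list set" where
  "paths Bd k a b = {\<pi>. length \<pi> = Suc k \<and> set \<pi> \<subseteq> {..<Bd} \<and> \<pi> ! 0 = a \<and> \<pi> ! k = b}"

definition PSc :: "nat \<Rightarrow> nat \<Rightarrow> (nat \<Rightarrow> nat \<Rightarrow> real) \<Rightarrow> nat \<Rightarrow> nat set \<Rightarrow> nat \<Rightarrow> nat \<Rightarrow> real" where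
  "PSc Bd N g k S a b = (\<Sum>\<pi>\<in>paths Bd k a b. (\<Prod>i\<in>{1..k}. g (\<pi>!(i-1)) (\<pi>!i)) *
      (if \<forall>s\<in>S\<inter>{1..k}. \<pi>!s < N then 1 else 0))"

definition sh :: "nat \<Rightarrow> nat set \<Rightarrow> nat set" where
  "sh j S = {s. s + j \<in> S}"

lemma finite_paths: "finite (paths Bd k a b)"
proof (rule finite_subset)
  show "paths Bd k a b \<subseteq> {xs. set xs \<subseteq> {..<Bd} \<and> length xs = Suc k}" unfolding paths_def by auto
  show "finite {xs. set xs \<subseteq> {..<Bd} \<and> length xs = Suc k}" by (rule finite_lists_length_eq) simp
qed

lemma paths_Suc:
  assumes a: "a < Bd"
  shows "paths Bd (Suc k) a b = (\<lambda>\<rho>. a # \<rho>) ` (\<Union>c\<in>{..<Bd}. paths Bd k c b)"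
proof (intro equalityI subsetI)
  fix \<pi> assume p: "\<pi> \<in> paths Bd (Suc k) a b"
  then have len: "length \<pi> = Suc (Suc k)" and st: "set \<pi> \<subseteq> {..<Bd}" and p0: "\<pi>!0 = a" and pk: "\<pi>!Suc k = b"
    by (auto simp: paths_def)
  obtain x \<rho> where xr: "\<pi> = x # \<rho>" using len by (cases \<pi>) auto
  have "x = a" using p0 xr by simp
  moreover have "\<rho> \<in> paths Bd k (\<rho>!0) b" using len st pk xr by (auto simp: paths_def)
  moreover have "\<rho>!0 < Bd" using len st xr by (auto simp: nth_mem subset_iff)
  ultimately show "\<pi> \<in> (\<lambda>\<rho>. a # \<rho>) ` (\<Union>c\<in>{..<Bd}. paths Bd k c b)" using xr by blast
next
  fix \<pi> assume "\<pi> \<in> (\<lambda>\<rho>. a # \<rho>) ` (\<Union>c\<in>{..<Bd}. paths Bd k c b)"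
  then obtain c \<rho> where "c < Bd" "\<rho> \<in> paths Bd k c b" "\<pi> = a # \<rho>" by auto
  then show "\<pi> \<in> paths Bd (Suc k) a b" using a by (auto simp: paths_def)
qed

lemma PSc_rec:
  assumes a: "a < Bd"
  shows "PSc Bd N g (Suc k) S a b =
    (\<Sum>c<Bd. g a c * (if 1 \<in> S \<longrightarrow> c < N then 1 else 0) * PSc Bd N g k (sh 1 S) c b)"
proof -
  define W where "W = (\<lambda>k S (\<pi>::nat list). (\<Prod>i\<in>{1..k}. g (\<pi>!(i-1)) (\<pi>!i)) *
      (if \<forall>s\<in>S\<inter>{1..k}. \<pi>!s < N then (1::real) else 0))"
  have PW: "PSc Bd N g k' S' a' b' = (\<Sum>\<pi>\<in>paths Bd k' a' b'. W k' S' \<pi>)" for k' S' a' b'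
    unfolding PSc_def W_def ..
  have step: "W (Suc k) S (a # \<rho>) = g a c * (if 1 \<in> S \<longrightarrow> c < N then 1 else 0) * W k (sh 1 S) \<rho>"
    if r: "\<rho> \<in> paths Bd k c b" for c \<rho>
  proof -
    have len: "length \<rho> = Suc k" and r0: "\<rho>!0 = c" using r by (auto simp: paths_def)
    have pr: "(\<Prod>i\<in>{1..Suc k}. g ((a#\<rho>)!(i-1)) ((a#\<rho>)!i)) = g a c * (\<Prod>i\<in>{1..k}. g (\<rho>!(i-1)) (\<rho>!i))"
    proof -
      have "{1..Suc k} = insert 1 {Suc 1..Suc k}" by auto
      then have "(\<Prod>i\<in>{1..Suc k}. g ((a#\<rho>)!(i-1)) ((a#\<rho>)!i))
          = g ((a#\<rho>)!0) ((a#\<rho>)!1) * (\<Prod>i\<in>{Suc 1..Suc k}. g ((a#\<rho>)!(i-1)) ((a#\<rho>)!i))"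
        by simp
      also have "(\<Prod>i\<in>{Suc 1..Suc k}. g ((a#\<rho>)!(i-1)) ((a#\<rho>)!i)) = (\<Prod>i\<in>{1..k}. g ((a#\<rho>)!i) ((a#\<rho>)!Suc i))"
        by (subst prod.shift_bounds_cl_Suc_ivl) simp
      also have "\<dots> = (\<Prod>i\<in>{1..k}. g (\<rho>!(i-1)) (\<rho>!i))"
        by (intro prod.cong refl) (auto simp: nth_Cons split: nat.splits)
      finally show ?thesis using r0 by simp
    qed
    have cs: "(\<forall>s\<in>S\<inter>{1..Suc k}. (a#\<rho>)!s < N) \<longleftrightarrow> (1 \<in> S \<longrightarrow> c < N) \<and> (\<forall>s\<in>sh 1 S\<inter>{1..k}. \<rho>!s < N)"
    proof
      assume h: "\<forall>s\<in>S\<inter>{1..Suc k}. (a#\<rho>)!s < N"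
      show "(1 \<in> S \<longrightarrow> c < N) \<and> (\<forall>s\<in>sh 1 S\<inter>{1..k}. \<rho>!s < N)"
      proof
        show "1 \<in> S \<longrightarrow> c < N"
        proof
          assume "1 \<in> S"
          then have "1 \<in> S \<inter> {1..Suc k}" by auto
          then have "(a#\<rho>)!1 < N" using h by blast
          then show "c < N" using r0 by simp
        qed
        show "\<forall>s\<in>sh 1 S\<inter>{1..k}. \<rho>!s < N"
        proof
          fix s assume s: "s \<in> sh 1 S\<inter>{1..k}"
          then have "Suc s \<in> S\<inter>{1..Suc k}" by (auto simp: sh_def)
          then have "(a#\<rho>)!Suc s < N" using h by blast
          then show "\<rho>!s < N" by simp
        qed
      qed
    next
      assume h: "(1 \<in> S \<longrightarrow> c < N) \<and> (\<forall>s\<in>sh 1 S\<inter>{1..k}. \<rho>!s < N)"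
      show "\<forall>s\<in>S\<inter>{1..Suc k}. (a#\<rho>)!s < N"
      proof
        fix s assume s: "s \<in> S\<inter>{1..Suc k}"
        show "(a#\<rho>)!s < N"
        proof (cases "s = 1")
          case True then show ?thesis using h s r0 by auto
        next
          case False
          then obtain s' where s': "s = Suc s'" "s' \<ge> 1" using s by (cases s) auto
          then have "s' \<in> sh 1 S\<inter>{1..k}" using s by (auto simp: sh_def)
          then show ?thesis using h s' by auto
        qed
      qed
    qed
    show ?thesis unfolding W_def pr cs by simp
  qed
  have "PSc Bd N g (Suc k) S a b = (\<Sum>\<pi>\<in>(\<lambda>\<rho>. a # \<rho>) ` (\<Union>c\<in>{..<Bd}. paths Bd k c b). W (Suc k) S \<pi>)"
    unfolding PW paths_Suc[OF a] ..
  also have "\<dots> = (\<Sum>\<rho>\<in>(\<Union>c\<in>{..<Bd}. paths Bd k c b). W (Suc k) S (a # \<rho>))"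
    by (subst sum.reindex) (auto simp: inj_on_def)
  also have "\<dots> = (\<Sum>c\<in>{..<Bd}. \<Sum>\<rho>\<in>paths Bd k c b. W (Suc k) S (a # \<rho>))"
    by (rule sum.UNION_disjoint) (use finite_paths in \<open>auto simp: paths_def\<close>)
  also have "\<dots> = (\<Sum>c\<in>{..<Bd}. \<Sum>\<rho>\<in>paths Bd k c b. g a c * (if 1 \<in> S \<longrightarrow> c < N then 1 else 0) * W k (sh 1 S) \<rho>)"
    by (intro sum.cong refl step) simp
  also have "\<dots> = (\<Sum>c<Bd. g a c * (if 1 \<in> S \<longrightarrow> c < N then 1 else 0) * PSc Bd N g k (sh 1 S) c b)"
    unfolding PW by (simp add: sum_distrib_left)
  finally show ?thesis .
qed

lemma PSc_cong_S: "S \<inter> {1..k} = S' \<inter> {1..k} \<Longrightarrow> PSc Bd N g k S a b = PSc Bd N g k S' a b"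
  unfolding PSc_def by simp

lemma PSc_0: "PSc Bd N g 0 S a b = (if a = b \<and> a < Bd then 1 else 0)"
proof -
  have "paths Bd 0 a b = (if a = b \<and> a < Bd then {[a]} else {})"
    unfolding paths_def by (auto simp: length_Suc_conv)
  then show ?thesis unfolding PSc_def by simp
qed

lemma PSc_1: "a < Bd \<Longrightarrow> c < Bd \<Longrightarrow> PSc Bd N g 1 {} a c = g a c"
  using PSc_rec[of a Bd N g 0 "{}" c] by (simp add: PSc_0 sh_def if_distrib cong: if_cong)

lemma PSc_1': "a < Bd \<Longrightarrow> c < Bd \<Longrightarrow> PSc Bd N g (Suc 0) {} a c = g a c"
  using PSc_1 by simp

lemma sh_sh: "sh j (sh k S) = sh (k + j) S"
  unfolding sh_def by (simp add: ac_simps)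

lemma PSc_conc:
  assumes "1 \<le> k" "S \<inter> {1..<k} = {}" "a < Bd"
  shows "PSc Bd N g (k + m) S a b =
    (\<Sum>c<Bd. PSc Bd N g k {} a c * (if k \<in> S \<longrightarrow> c < N then 1 else 0) * PSc Bd N g m (sh k S) c b)"
  using assms
proof (induction k arbitrary: S a rule: nat_induct_at_least)
  case base
  have "PSc Bd N g (1 + m) S a b = (\<Sum>c<Bd. g a c * (if 1 \<in> S \<longrightarrow> c < N then 1 else 0) * PSc Bd N g m (sh 1 S) c b)"
    using PSc_rec[OF base(2)] by simp
  also have "\<dots> = (\<Sum>c<Bd. PSc Bd N g 1 {} a c * (if 1 \<in> S \<longrightarrow> c < N then 1 else 0) * PSc Bd N g m (sh 1 S) c b)"
    using base(2) by (intro sum.cong refl) (simp add: PSc_1')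
  finally show ?case .
next
  case (Suc k)
  have n1: "1 \<notin> S" using Suc.prems Suc.hyps by auto
  have sh1: "sh 1 S \<inter> {1..<k} = {}" using Suc.prems by (auto simp: sh_def)
  have "PSc Bd N g (Suc k + m) S a b = PSc Bd N g (Suc (k + m)) S a b" by simp
  also have "\<dots> = (\<Sum>d<Bd. g a d * PSc Bd N g (k + m) (sh 1 S) d b)"
    using PSc_rec[OF Suc.prems(2)] n1 by simp
  also have "\<dots> = (\<Sum>d<Bd. g a d * (\<Sum>c<Bd. PSc Bd N g k {} d c * (if k \<in> sh 1 S \<longrightarrow> c < N then 1 else 0) * PSc Bd N g m (sh k (sh 1 S)) c b))"
    by (intro sum.cong refl) (subst Suc.IH[OF sh1], auto)
  also have "\<dots> = (\<Sum>c<Bd. (\<Sum>d<Bd. g a d * PSc Bd N g k {} d c) * (if Suc k \<in> S \<longrightarrow> c < N then 1 else 0) * PSc Bd N g m (sh (Suc k) S) c b)"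
  proof -
    have e1: "k \<in> sh 1 S \<longleftrightarrow> Suc k \<in> S" by (simp add: sh_def)
    have e2: "sh k (sh 1 S) = sh (Suc k) S" by (simp add: sh_sh)
    show ?thesis unfolding e1 e2
      apply (simp only: sum_distrib_left sum_distrib_right mult.assoc)
      apply (subst sum.swap)
      apply (rule refl)
      done
  qed
  also have "\<dots> = (\<Sum>c<Bd. PSc Bd N g (Suc k) {} a c * (if Suc k \<in> S \<longrightarrow> c < N then 1 else 0) * PSc Bd N g m (sh (Suc k) S) c b)"
  proof (intro sum.cong refl)
    fix c
    have "PSc Bd N g (Suc k) {} a c = (\<Sum>d<Bd. g a d * PSc Bd N g k {} d c)"
      using PSc_rec[OF Suc.prems(2), of N g k "{}" c] by (simp add: sh_def)
    then show "(\<Sum>d<Bd. g a d * PSc Bd N g k {} d c) * (if Suc k \<in> S \<longrightarrow> c < N then 1 else 0) * PSc Bd N g m (sh (Suc k) S) c b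
        = PSc Bd N g (Suc k) {} a c * (if Suc k \<in> S \<longrightarrow> c < N then 1 else 0) * PSc Bd N g m (sh (Suc k) S) c b" by simp
  qed
  finally show ?case .
qed



lemma imm_sum':
  assumes "finite K" "\<And>k. k \<notin> K \<Longrightarrow> A i k * B k j = 0"
  shows "inf_mat_mult A B i j = (\<Sum>k\<in>K. A i k * B k j)"
proof -
  have "inf_mat_mult A B i j = infsum (\<lambda>k. A i k * B k j) K"
    unfolding inf_mat_mult_def by (rule infsum_cong_neutral) (use assms in auto)
  then show ?thesis using assms(1) by simp
qed

fun ps :: "nat list \<Rightarrow> nat list" where
  "ps [] = []"
| "ps [k] = []"
| "ps (k # k' # ks) = k # map (\<lambda>s. s + k) (ps (k' # ks))"

lemma ps_pos: "\<forall>k\<in>set ks. 0 < k \<Longrightarrow> \<forall>x\<in>set (ps ks). 0 < x"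
  by (induction ks rule: ps.induct) auto

context ens
begin

definition "MT = (\<lambda>x y. M y x)"
definition "Gt = (\<lambda>k i j. Mp k j i)"

fun GLr :: "nat list \<Rightarrow> nat \<Rightarrow> nat \<Rightarrow> real" where
  "GLr [] = idm"
| "GLr (k # ks) = mm N (Gt k) (GLr ks)"

lemma M_zero: "a + wM \<le> c \<Longrightarrow> M c a = 0"
  using bandM unfolding band_def by blast

lemma PSMp: "a + k * wM + 1 \<le> Bd \<Longrightarrow> PSc Bd N MT k {} a b = Mp k b a"
proof (induction k arbitrary: a)
  case 0
  then show ?case by (simp add: PSc_0 Mp0 idm_def)
next
  case (Suc k)
  have a: "a < Bd" using Suc.prems by simp
  have "PSc Bd N MT (Suc k) {} a b = (\<Sum>c<Bd. MT a c * PSc Bd N MT k (sh 1 {}) c b)"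
    using PSc_rec[OF a, of N MT k "{}" b] by simp
  also have "\<dots> = (\<Sum>c<Bd. Mp k b c * M c a)"
  proof (intro sum.cong refl)
    fix c assume c: "c \<in> {..<Bd}"
    show "MT a c * PSc Bd N MT k (sh 1 {}) c b = Mp k b c * M c a"
    proof (cases "a + wM \<le> c")
      case True then show ?thesis by (simp add: MT_def M_zero)
    next
      case False
      then have "c + k * wM + 1 \<le> Bd" using Suc.prems by (simp add: algebra_simps)
      then show ?thesis using Suc.IH by (simp add: MT_def sh_def)
    qed
  qed
  also have "\<dots> = Mp (Suc k) b a"
    unfolding Mp_def inf_mat_pow.simps
  proof (rule imm_sum'[symmetric])
    fix c assume "c \<notin> {..<Bd}"
    then have "a + wM \<le> c" using Suc.prems by simp
    then show "inf_mat_pow M k b c * M c a = 0" by (simp add: M_zero)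
  qed simp
  finally show ?case .
qed

lemma SEG:
  assumes "ks \<noteq> []" "\<forall>k\<in>set ks. 0 < k" "sum_list ks \<le> n0" "N + n0 * wM + 1 \<le> Bd" "a < N" "b < N"
  shows "PSc Bd N MT (sum_list ks) (set (ps ks)) a b = GLr ks a b"
  using assms
proof (induction ks arbitrary: a b n0 rule: ps.induct)
  case 1 then show ?case by simp
next
  case (2 k)
  have "k * wM \<le> n0 * wM" using 2 by simp
  then have "a + k * wM + 1 \<le> Bd" using 2 by linarith
  then have "PSc Bd N MT k {} a b = Mp k b a" by (rule PSMp)
  moreover have "GLr [k] a b = Mp k b a" using 2 by (simp add: mm_idm_right Gt_def)
  ultimately show ?case by simp
next
  case (3 k k' ks)
  define m where "m = sum_list (k' # ks)"
  define S where "S = set (ps (k # k' # ks))"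
  have kpos: "1 \<le> k" using 3 by simp
  have Pp: "\<forall>x\<in>set (ps (k' # ks)). 0 < x" by (rule ps_pos) (use "3.prems" in simp)
  have S: "S = insert k ((\<lambda>s. s + k) ` set (ps (k' # ks)))" unfolding S_def by simp
  have S1: "S \<inter> {1..<k} = {}" using Pp unfolding S by auto
  have a: "a < Bd" using 3 by simp
  have shS: "sh k S \<inter> {1..m} = set (ps (k' # ks)) \<inter> {1..m}"
    unfolding S sh_def by auto
  have kn0: "k * wM \<le> n0 * wM" using "3.prems" by simp
  have "PSc Bd N MT (sum_list (k # k' # ks)) S a b = PSc Bd N MT (k + m) S a b" by (simp add: m_def)
  also have "\<dots> = (\<Sum>c<Bd. PSc Bd N MT k {} a c * (if k \<in> S \<longrightarrow> c < N then 1 else 0) * PSc Bd N MT m (sh k S) c b)"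
    by (rule PSc_conc[OF kpos S1 a])
  also have "\<dots> = (\<Sum>c<Bd. if c < N then Gt k a c * GLr (k' # ks) c b else 0)"
  proof (intro sum.cong refl)
    fix c assume c: "c \<in> {..<Bd}"
    have e1: "PSc Bd N MT k {} a c = Gt k a c"
      unfolding Gt_def by (rule PSMp) (use kn0 "3.prems" in linarith)
    show "PSc Bd N MT k {} a c * (if k \<in> S \<longrightarrow> c < N then 1 else 0) * PSc Bd N MT m (sh k S) c b
        = (if c < N then Gt k a c * GLr (k' # ks) c b else 0)"
    proof (cases "c < N")
      case True
      have "PSc Bd N MT m (sh k S) c b = PSc Bd N MT m (set (ps (k' # ks))) c b"
        by (rule PSc_cong_S[OF shS])
      also have "\<dots> = GLr (k' # ks) c b"
        unfolding m_def by (rule "3.IH") (use "3.prems" True in auto)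
      finally show ?thesis using True e1 S by simp
    next
      case False then show ?thesis using S by simp
    qed
  qed
  also have "\<dots> = (\<Sum>c<N. Gt k a c * GLr (k' # ks) c b)"
  proof -
    have "N \<le> Bd" using "3.prems" by simp
    then have e: "{c \<in> {..<Bd}. c < N} = {..<N}" by auto
    show ?thesis
      using sum.inter_filter[of "{..<Bd}" "\<lambda>c. Gt k a c * GLr (k' # ks) c b" "\<lambda>c. c < N"]
      unfolding e by simp
  qed
  also have "\<dots> = GLr (k # k' # ks) a b" by (simp add: mm_def)
  finally show ?case unfolding S_def .
qed

end


context ens
begin

lemma Gamma_PSc:
  assumes ns: "ns \<in> Lambda_set n" and Bd: "Bd = N + n * wM + 1"
  shows "(\<Sum>\<pi>\<in>Gamma_set n ns N M. \<Prod>i\<in>{1..n}. M (\<pi> ! i) (\<pi> ! (i - 1)))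
       = (\<Sum>a<N. PSc Bd N MT n {} a a - PSc Bd N MT n (set ns) a a)"
proof -
  define S where "S = set ns"
  have nsne: "ns \<noteq> []" and Ssub: "S \<subseteq> {1..<n}" using ns by (auto simp: Lambda_set_def S_def)
  define w where "w = (\<lambda>\<pi>. \<Prod>i\<in>{1..n}. M (\<pi> ! i) (\<pi> ! (i - 1)))"
  have wMT: "(\<Prod>i\<in>{1..n}. MT (\<pi>!(i-1)) (\<pi>!i)) = w \<pi>" for \<pi> unfolding w_def MT_def ..
  define P0 where "P0 = (\<Union>a\<in>{..<N}. paths Bd n a a)"
  define G' where "G' = {\<pi>\<in>P0. \<exists>s\<in>S. N \<le> \<pi>!s}"
  have fP0: "finite P0" unfolding P0_def by (auto simp: finite_paths)
  have "(\<Sum>a<N. PSc Bd N MT n {} a a - PSc Bd N MT n S a a)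
      = (\<Sum>a<N. \<Sum>\<pi>\<in>paths Bd n a a. w \<pi> * (if \<exists>s\<in>S. N \<le> \<pi>!s then 1 else 0))"
  proof (intro sum.cong refl)
    fix a
    have SI: "S \<inter> {1..n} = S" using Ssub by auto
    show "PSc Bd N MT n {} a a - PSc Bd N MT n S a a
        = (\<Sum>\<pi>\<in>paths Bd n a a. w \<pi> * (if \<exists>s\<in>S. N \<le> \<pi>!s then 1 else 0))"
      unfolding PSc_def SI wMT
      by (simp add: sum_subtractf[symmetric]) (intro sum.cong refl, auto simp: not_less)
  qed
  also have "\<dots> = (\<Sum>\<pi>\<in>P0. w \<pi> * (if \<exists>s\<in>S. N \<le> \<pi>!s then 1 else 0))"
    unfolding P0_def
    by (rule sum.UNION_disjoint[symmetric]) (use finite_paths in \<open>auto simp: paths_def\<close>)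
  also have "\<dots> = (\<Sum>\<pi>\<in>G'. w \<pi>)"
    unfolding G'_def using sum.inter_filter[OF fP0, of w "\<lambda>\<pi>. \<exists>s\<in>S. N \<le> \<pi>!s"]
    by (simp add: if_distrib cong: if_cong)
  also have "\<dots> = (\<Sum>\<pi>\<in>Gamma_set n ns N M. w \<pi>)"
  proof (rule sum.mono_neutral_right)
    show "finite G'" unfolding G'_def using fP0 by simp
    show "Gamma_set n ns N M \<subseteq> G'"
    proof
      fix \<pi> assume g: "\<pi> \<in> Gamma_set n ns N M"
      then have len: "length \<pi> = n + 1" and ed: "\<forall>i\<in>{1..n}. M (\<pi> ! i) (\<pi> ! (i - 1)) \<noteq> 0"
        and cl: "\<pi>!0 = \<pi>!n" and p0: "\<pi>!0 < N" and mx: "Max ((\<lambda>m. \<pi> ! m) ` set ns) \<ge> N"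
        by (auto simp: Gamma_set_def)
      have bnd: "i \<le> n \<Longrightarrow> \<pi>!i < N + i * wM" for i
      proof (induction i)
        case 0 then show ?case using p0 by simp
      next
        case (Suc i)
        have "M (\<pi> ! Suc i) (\<pi> ! i) \<noteq> 0" using ed Suc.prems by force
        then have "\<pi>!Suc i < \<pi>!i + wM" using M_zero[of "\<pi>!i" "\<pi>!Suc i"] by linarith
        then show ?case using Suc by simp
      qed
      have "set \<pi> \<subseteq> {..<Bd}"
      proof
        fix x assume "x \<in> set \<pi>"
        then obtain i where i: "i < length \<pi>" "x = \<pi>!i" by (auto simp: in_set_conv_nth)
        then have "i \<le> n" using len by simp
        then have "x < N + i * wM" using bnd i by simp
        moreover have "i * wM \<le> n * wM" using \<open>i \<le> n\<close> by simp
        ultimately have "x < N + n * wM" by linarith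
        then show "x \<in> {..<Bd}" using Bd by simp
      qed
      then have "\<pi> \<in> paths Bd n (\<pi>!0) (\<pi>!0)" using len cl by (simp add: paths_def)
      then have "\<pi> \<in> P0" using p0 unfolding P0_def by blast
      moreover have "\<exists>s\<in>S. N \<le> \<pi>!s"
      proof -
        have "finite ((\<lambda>m. \<pi> ! m) ` set ns)" "(\<lambda>m. \<pi> ! m) ` set ns \<noteq> {}" using nsne by auto
        then have "\<exists>y\<in>(\<lambda>m. \<pi> ! m) ` set ns. N \<le> y" using mx Max_ge_iff by blast
        then show ?thesis unfolding S_def by blast
      qed
      ultimately show "\<pi> \<in> G'" unfolding G'_def by blast
    qed
    show "\<forall>\<pi>\<in>G' - Gamma_set n ns N M. w \<pi> = 0"
    proof
      fix \<pi> assume g: "\<pi> \<in> G' - Gamma_set n ns N M"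
      then obtain a where a: "a < N" "\<pi> \<in> paths Bd n a a" and ex: "\<exists>s\<in>S. N \<le> \<pi>!s"
        unfolding G'_def P0_def by blast
      have len: "length \<pi> = n + 1" and cl: "\<pi>!0 = \<pi>!n" and p0: "\<pi>!0 < N"
        using a by (auto simp: paths_def)
      have mx: "Max ((\<lambda>m. \<pi> ! m) ` set ns) \<ge> N"
      proof -
        obtain s where s: "s \<in> S" "N \<le> \<pi>!s" using ex by blast
        have "\<pi>!s \<le> Max ((\<lambda>m. \<pi> ! m) ` set ns)"
          by (rule Max_ge) (use s in \<open>auto simp: S_def\<close>)
        then show ?thesis using s by linarith
      qed
      have "\<not> (\<forall>i\<in>{1..n}. M (\<pi> ! i) (\<pi> ! (i - 1)) \<noteq> 0)"
        using g len cl p0 mx by (auto simp: Gamma_set_def)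
      then obtain i where "i \<in> {1..n}" "M (\<pi> ! i) (\<pi> ! (i - 1)) = 0" by blast
      then show "w \<pi> = 0" unfolding w_def by (meson finite_atLeastAtMost prod_zero)
    qed
  qed
  finally show ?thesis unfolding w_def S_def ..
qed

end


definition Lp :: "nat \<Rightarrow> nat list set" where "Lp n = {ns. sorted_wrt (<) ns \<and> set ns \<subseteq> {1..<n}}"
definition Cp :: "nat \<Rightarrow> nat list set" where "Cp n = {ks. ks \<noteq> [] \<and> (\<forall>k\<in>set ks. 0 < k) \<and> sum_list ks = n}"

lemma length_gaps[simp]: "length (gaps n ns) = length ns + 1"
  unfolding gaps_def by simp

lemma gaps_Nil: "gaps n [] = [n]"
  unfolding gaps_def by simp

lemma gaps_Cons:
  fixes n1 n :: nat
  assumes s: "sorted_wrt (<) (n1 # ns)" and le: "\<forall>x\<in>set (n1 # ns). x \<le> n"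
  shows "gaps n (n1 # ns) = n1 # gaps (n - n1) (map (\<lambda>x. x - n1) ns)"
proof (rule nth_equalityI)
  show "length (gaps n (n1 # ns)) = length (n1 # gaps (n - n1) (map (\<lambda>x. x - n1) ns))" by simp
  fix j assume j: "j < length (gaps n (n1 # ns))"
  have ge: "\<forall>x\<in>set ns. n1 < x" using s by simp
  show "gaps n (n1 # ns) ! j = (n1 # gaps (n - n1) (map (\<lambda>x. x - n1) ns)) ! j"
  proof (cases j)
    case 0 then show ?thesis unfolding gaps_def by (simp add: nth_append)
  next
    case (Suc i)
    then have i: "i < length ns + 1" using j by simp
    have L: "gaps n (n1 # ns) ! j = (ns @ [n]) ! i - (n1 # ns) ! i"
      unfolding gaps_def using j Suc by (simp add: nth_append del: upt_Suc)
    have R: "(n1 # gaps (n - n1) (map (\<lambda>x. x - n1) ns)) ! j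
        = (map (\<lambda>x. x - n1) ns @ [n - n1]) ! i - (0 # map (\<lambda>x. x - n1) ns) ! i"
      unfolding gaps_def using i Suc by (simp add: nth_append del: upt_Suc)
    show ?thesis
    proof (cases "i < length ns")
      case True
      have a: "ns ! i > n1" using ge True by (simp add: nth_mem)
      show ?thesis
      proof (cases i)
        case 0 then show ?thesis using L R True by (simp add: nth_append)
      next
        case (Suc i')
        have b: "ns ! i' > n1" using ge True Suc by (simp add: nth_mem)
        show ?thesis using L R True Suc a b by (simp add: nth_append)
      qed
    next
      case False
      then have ii: "i = length ns" using i by simp
      have nn: "n1 \<le> n" using le by simp
      show ?thesis
      proof (cases ns rule: rev_cases)
        case Nil then show ?thesis using L R ii nn by simp
      next
        case (snoc ys y)
        have ylt: "n1 < y" "y \<le> n" using ge le snoc by auto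
        have "(n1 # ns) ! i = y" using ii snoc by (simp add: nth_append)
        moreover have "(0 # map (\<lambda>x. x - n1) ns) ! i = y - n1" using ii snoc by (simp add: nth_append)
        ultimately show ?thesis using L R ii ylt nn by (simp add: nth_append)
      qed
    qed
  qed
qed

lemma sorted_shift: "sorted_wrt (<) ns \<Longrightarrow> \<forall>x\<in>set ns. (c::nat) < x \<Longrightarrow> sorted_wrt (<) (map (\<lambda>x. x - c) ns)"
proof (induction ns)
  case Nil then show ?case by simp
next
  case (Cons a ns)
  have "\<forall>y\<in>set ns. a - c < y - c"
  proof
    fix y assume y: "y \<in> set ns"
    then have "a < y" "c < a" using Cons.prems by auto
    then show "a - c < y - c" by simp
  qed
  then show ?case using Cons by simp
qed

lemma map_shift_Lp:
  fixes n1 n :: nat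
  assumes s: "sorted_wrt (<) (n1 # ns)" and st: "set (n1 # ns) \<subseteq> {1..<n}"
  shows "map (\<lambda>x. x - n1) ns \<in> Lp (n - n1)"
proof -
  have ge: "\<forall>x\<in>set ns. n1 < x" using s by simp
  have "sorted_wrt (<) ns" using s by simp
  then have "sorted_wrt (<) (map (\<lambda>x. x - n1) ns)" using ge by (rule sorted_shift)
  moreover have "set (map (\<lambda>x. x - n1) ns) \<subseteq> {1..<n - n1}"
  proof
    fix y assume "y \<in> set (map (\<lambda>x. x - n1) ns)"
    then obtain x where x: "x \<in> set ns" "y = x - n1" by auto
    have "n1 < x" using ge x by simp
    moreover have "x < n" using st x by auto
    ultimately show "y \<in> {1..<n - n1}" using x by auto
  qed
  ultimately show ?thesis unfolding Lp_def by simp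
qed

lemma gaps_in_Cp: "ns \<in> Lp n \<Longrightarrow> 1 \<le> n \<Longrightarrow> gaps n ns \<in> Cp n"
proof (induction "length ns" arbitrary: ns n rule: less_induct)
  case less
  show ?case
  proof (cases ns)
    case Nil then show ?thesis using less.prems by (simp add: gaps_Nil Cp_def)
  next
    case (Cons n1 ns')
    have s: "sorted_wrt (<) (n1 # ns')" and st: "set (n1 # ns') \<subseteq> {1..<n}" using less.prems Cons by (auto simp: Lp_def)
    have le: "\<forall>x\<in>set (n1 # ns'). x \<le> n" using st by auto
    have n1: "1 \<le> n1" "n1 < n" using st by auto
    have "gaps (n - n1) (map (\<lambda>x. x - n1) ns') \<in> Cp (n - n1)"
      by (rule less.hyps) (use Cons map_shift_Lp[OF s st] n1 in auto)
    then show ?thesis using n1 unfolding Cons gaps_Cons[OF s le] Cp_def by auto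
  qed
qed

lemma ps_gaps: "ns \<in> Lp n \<Longrightarrow> ps (gaps n ns) = ns"
proof (induction "length ns" arbitrary: ns n rule: less_induct)
  case less
  show ?case
  proof (cases ns)
    case Nil then show ?thesis by (simp add: gaps_Nil)
  next
    case (Cons n1 ns')
    have s: "sorted_wrt (<) (n1 # ns')" and st: "set (n1 # ns') \<subseteq> {1..<n}" using less.prems Cons by (auto simp: Lp_def)
    have le: "\<forall>x\<in>set (n1 # ns'). x \<le> n" using st by auto
    obtain k' ks where g: "gaps (n - n1) (map (\<lambda>x. x - n1) ns') = k' # ks"
      by (cases "gaps (n - n1) (map (\<lambda>x. x - n1) ns')") (simp_all only: length_gaps[symmetric] length_0_conv[symmetric], auto)
    have IH: "ps (gaps (n - n1) (map (\<lambda>x. x - n1) ns')) = map (\<lambda>x. x - n1) ns'"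
      by (rule less.hyps) (use Cons map_shift_Lp[OF s st] in auto)
    have ge: "\<forall>x\<in>set ns'. n1 < x" using s by simp
    have "map (\<lambda>s. s + n1) (map (\<lambda>x. x - n1) ns') = ns'"
      using ge by (induction ns') auto
    then show ?thesis unfolding Cons gaps_Cons[OF s le] g using IH g by simp
  qed
qed

lemma ps_in_Lp: "ks \<in> Cp n \<Longrightarrow> ps ks \<in> Lp n \<and> length (ps ks) + 1 = length ks"
proof (induction ks arbitrary: n rule: ps.induct)
  case 1 then show ?case by (simp add: Cp_def)
next
  case (2 k) then show ?case by (simp add: Lp_def)
next
  case (3 k k' ks)
  have pos: "0 < k" "\<forall>x\<in>set (k' # ks). 0 < x" and sm: "k + sum_list (k' # ks) = n" using "3.prems" by (auto simp: Cp_def)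
  have "k' # ks \<in> Cp (n - k)" using pos sm by (auto simp: Cp_def)
  then have IH: "ps (k' # ks) \<in> Lp (n - k)" "length (ps (k' # ks)) + 1 = length (k' # ks)" using "3.IH" by auto
  have "sum_list (k' # ks) \<ge> 1" using pos by simp
  then have kn: "k < n" using sm by simp
  have sub: "s + k < n" if "s \<in> set (ps (k' # ks))" for s
  proof -
    have "s < n - k" using IH(1) that unfolding Lp_def by auto
    then show ?thesis by simp
  qed
  have "ps (k # k' # ks) \<in> Lp n"
    using IH(1) pos kn sub unfolding Lp_def by (auto simp: sorted_wrt_map)
  then show ?case using IH(2) by simp
qed

lemma gaps_ps: "ks \<in> Cp n \<Longrightarrow> gaps n (ps ks) = ks"
proof (induction ks arbitrary: n rule: ps.induct)
  case 1 then show ?case by (simp add: Cp_def)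
next
  case (2 k) then show ?case by (simp add: Cp_def gaps_Nil)
next
  case (3 k k' ks)
  have pos: "0 < k" "\<forall>x\<in>set (k' # ks). 0 < x" and sm: "k + sum_list (k' # ks) = n" using "3.prems" by (auto simp: Cp_def)
  have C: "k' # ks \<in> Cp (n - k)" using pos sm by (auto simp: Cp_def)
  have Lk: "ps (k # k' # ks) \<in> Lp n" using ps_in_Lp[OF "3.prems"] by simp
  have s: "sorted_wrt (<) (k # map (\<lambda>s. s + k) (ps (k' # ks)))" and le: "\<forall>x\<in>set (k # map (\<lambda>s. s + k) (ps (k' # ks))). x \<le> n"
    using Lk by (auto simp: Lp_def)
  have "map (\<lambda>x. x - k) (map (\<lambda>s. s + k) (ps (k' # ks))) = ps (k' # ks)" by (simp add: comp_def)
  then show ?case using gaps_Cons[OF s le] "3.IH"[OF C] by simp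
qed



definition cps :: "nat \<Rightarrow> nat \<Rightarrow> nat list set" where
  "cps l n = {ks. length ks = l \<and> (\<forall>k\<in>set ks. 0 < k) \<and> sum_list ks = n}"

lemma finite_cps: "finite (cps l n)"
proof (rule finite_subset)
  show "cps l n \<subseteq> {ks. set ks \<subseteq> {..n} \<and> length ks = l}"
  proof
    fix ks assume ks: "ks \<in> cps l n"
    have "set ks \<subseteq> {..n}"
    proof
      fix k assume "k \<in> set ks"
      then have "k \<le> sum_list ks" by (rule member_le_sum_list) simp
      then show "k \<in> {..n}" using ks by (simp add: cps_def)
    qed
    then show "ks \<in> {ks. set ks \<subseteq> {..n} \<and> length ks = l}" using ks by (simp add: cps_def)
  qed
  show "finite {ks. set ks \<subseteq> {..n} \<and> length ks = l}" by (rule finite_lists_length_eq) simp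
qed

lemma cps_0: "cps 0 n = (if n = 0 then {[]} else {})"
  unfolding cps_def by auto

lemma cps_Suc: "cps (Suc l) n = (\<lambda>p. fst p # snd p) ` Sigma {1..n} (\<lambda>a. cps l (n - a))"
proof (intro equalityI subsetI)
  fix ks assume "ks \<in> cps (Suc l) n"
  then have h: "length ks = Suc l" "\<forall>k\<in>set ks. 0 < k" "sum_list ks = n" unfolding cps_def by auto
  then obtain a ks' where ks: "ks = a # ks'" by (cases ks) auto
  have p: "length ks' = l" "0 < a" "\<forall>k\<in>set ks'. 0 < k" "a + sum_list ks' = n" using h ks by auto
  then have "(a, ks') \<in> Sigma {1..n} (\<lambda>a. cps l (n - a))" unfolding cps_def by auto
  moreover have "ks = fst (a, ks') # snd (a, ks')" using ks by simp
  ultimately show "ks \<in> (\<lambda>p. fst p # snd p) ` Sigma {1..n} (\<lambda>a. cps l (n - a))" by (rule rev_image_eqI)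
next
  fix ks assume "ks \<in> (\<lambda>p. fst p # snd p) ` Sigma {1..n} (\<lambda>a. cps l (n - a))"
  then show "ks \<in> cps (Suc l) n" unfolding cps_def by auto
qed

fun GA :: "nat \<Rightarrow> (nat \<Rightarrow> nat \<Rightarrow> real fps) \<Rightarrow> nat list \<Rightarrow> nat \<Rightarrow> nat \<Rightarrow> real" where
  "GA N A [] = idm"
| "GA N A (k # ks) = mm N (\<lambda>i j. fps_nth (A i j) k) (GA N A ks)"

lemma fps_nth_idm: "fps_nth (idm i j :: real fps) n = (if n = 0 then idm i j else 0)"
  unfolding idm_def by simp

lemma coeff_mpow:
  assumes A: "low N 1 A" and ij: "i < N" "j < N"
  shows "fps_nth (mpow N A l i j) n = (\<Sum>ks\<in>cps l n. GA N A ks i j)"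
  using ij
proof (induction l arbitrary: n i j)
  case 0
  show ?case by (simp add: fps_nth_idm cps_0)
next
  case (Suc l)
  have A0: "fps_nth (A i c) 0 = 0" if "c < N" for c using A Suc.prems that unfolding low_def by auto
  have "fps_nth (mpow N A (Suc l) i j) n = fps_nth (\<Sum>c<N. A i c * mpow N A l c j) n"
    using Suc.prems by (simp add: mpow_Suc_left mm_def del: mpow.simps)
  also have "\<dots> = (\<Sum>c<N. \<Sum>a=0..n. fps_nth (A i c) a * fps_nth (mpow N A l c j) (n - a))"
    by (simp add: fps_sum_nth fps_mult_nth)
  also have "\<dots> = (\<Sum>c<N. \<Sum>a\<in>{1..n}. fps_nth (A i c) a * (\<Sum>ks\<in>cps l (n - a). GA N A ks c j))"
  proof (rule sum.cong[OF refl])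
    fix c assume c: "c \<in> {..<N}"
    have "(\<Sum>a=0..n. fps_nth (A i c) a * fps_nth (mpow N A l c j) (n - a))
        = (\<Sum>a\<in>{1..n}. fps_nth (A i c) a * fps_nth (mpow N A l c j) (n - a))"
    proof -
      have "{0..n} = insert 0 {1..n}" by auto
      then show ?thesis using A0 c by simp
    qed
    also have "\<dots> = (\<Sum>a\<in>{1..n}. fps_nth (A i c) a * (\<Sum>ks\<in>cps l (n - a). GA N A ks c j))"
      using c Suc.IH Suc.prems by simp
    finally show "(\<Sum>a=0..n. fps_nth (A i c) a * fps_nth (mpow N A l c j) (n - a))
        = (\<Sum>a\<in>{1..n}. fps_nth (A i c) a * (\<Sum>ks\<in>cps l (n - a). GA N A ks c j))" .
  qed
  also have "\<dots> = (\<Sum>c<N. \<Sum>a\<in>{1..n}. \<Sum>ks\<in>cps l (n - a). fps_nth (A i c) a * GA N A ks c j)"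
    by (simp only: sum_distrib_left)
  also have "\<dots> = (\<Sum>a\<in>{1..n}. \<Sum>c<N. \<Sum>ks\<in>cps l (n - a). fps_nth (A i c) a * GA N A ks c j)"
    by (rule sum.swap)
  also have "\<dots> = (\<Sum>a\<in>{1..n}. \<Sum>ks\<in>cps l (n - a). \<Sum>c<N. fps_nth (A i c) a * GA N A ks c j)"
    by (rule sum.cong[OF refl], rule sum.swap)
  also have "\<dots> = (\<Sum>a\<in>{1..n}. \<Sum>ks\<in>cps l (n - a). GA N A (a # ks) i j)"
    by (simp add: mm_def)
  also have "\<dots> = (\<Sum>p\<in>Sigma {1..n} (\<lambda>a. cps l (n - a)). GA N A (fst p # snd p) i j)"
    by (subst sum.Sigma) (auto simp: finite_cps split_beta)
  also have "\<dots> = (\<Sum>ks\<in>cps (Suc l) n. GA N A ks i j)"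
    unfolding cps_Suc by (subst sum.reindex) (auto simp: inj_on_def)
  finally show ?case .
qed

lemma coeff_tr_mpow:
  assumes A: "low N 1 A"
  shows "fps_nth (tr N (mpow N A l)) n = (\<Sum>ks\<in>cps l n. tr N (GA N A ks))"
proof -
  have "fps_nth (tr N (mpow N A l)) n = (\<Sum>i<N. \<Sum>ks\<in>cps l n. GA N A ks i i)"
    unfolding tr_def by (simp add: fps_sum_nth coeff_mpow[OF A])
  also have "\<dots> = (\<Sum>ks\<in>cps l n. \<Sum>i<N. GA N A ks i i)" by (rule sum.swap)
  finally show ?thesis unfolding tr_def .
qed

lemma cps_pos: "ks \<in> cps l n \<Longrightarrow> \<forall>k\<in>set ks. 0 < k" unfolding cps_def by auto

section \<open>The exponential identity\<close>

lemma exp_identity: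
  assumes n: "n \<ge> 2"
  shows "(\<Sum>l\<in>{1..n}. (-1)^(l+1) / real l * (\<Sum>ks\<in>cps l n. 1 / prod_list (map fact ks))) = (0::real)"
proof -
  define A1 where "A1 = (\<lambda>(i::nat) (j::nat). fps_exp (1::real) - 1)"
  have low1: "low 1 1 A1" unfolding low_def A1_def by simp
  have GA1: "GA 1 A1 ks 0 0 = 1 / prod_list (map fact ks)" if "\<forall>k\<in>set ks. 0 < k" for ks
    using that
  proof (induction ks)
    case Nil then show ?case by (simp add: idm_def)
  next
    case (Cons k ks)
    then show ?case by (simp add: mm_def A1_def)
  qed
  have GA1': "GA (Suc 0) A1 ks 0 0 = 1 / prod_list (map fact ks)" if "\<forall>k\<in>set ks. 0 < k" for ks
    using GA1[OF that] by simp
  have det1: "fdet 1 (\<lambda>i j. idm i j + A1 i j) = fps_exp 1"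
  proof -
    have "fdet 1 (\<lambda>i j. idm i j + A1 i j) = mat 1 1 (\<lambda>(i,j). idm i j + A1 i j) $$ (0,0)"
      unfolding fdet_def by (rule det_single) simp
    then show ?thesis by (simp add: idm_def A1_def)
  qed
  have comp: "fps_ln 1 oo (fps_exp 1 - 1) = (fps_X :: real fps)"
    by (simp add: fps_ln_fps_exp_inv fps_inv)
  have "fps_nth (fps_ln 1 oo (fdet 1 (\<lambda>i j. idm i j + A1 i j) - 1)) n
      = (\<Sum>l\<in>{1..n}. (-1)^(l+1) / real l * fps_nth (tr 1 (mpow 1 A1 l)) n)"
    by (rule logdet[OF low1])
  moreover have "fps_nth (fps_ln 1 oo (fdet 1 (\<lambda>i j. idm i j + A1 i j) - 1)) n = 0"
    unfolding det1 comp using n by simp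
  moreover have "fps_nth (tr 1 (mpow 1 A1 l)) n = (\<Sum>ks\<in>cps l n. 1 / prod_list (map fact ks))" for l
  proof -
    have "fps_nth (tr 1 (mpow 1 A1 l)) n = (\<Sum>ks\<in>cps l n. tr 1 (GA 1 A1 ks))"
      by (rule coeff_tr_mpow[OF low1])
    also have "\<dots> = (\<Sum>ks\<in>cps l n. 1 / prod_list (map fact ks))"
      by (intro sum.cong refl) (simp add: tr_def GA1' cps_pos)
    finally show ?thesis .
  qed
  ultimately show ?thesis by simp
qed



lemma length_le_sum_list: "\<forall>k\<in>set ks. 0 < (k::nat) \<Longrightarrow> length ks \<le> sum_list ks"
  by (induction ks) auto

lemma cps_1: "1 \<le> n \<Longrightarrow> cps 1 n = {[n]}"
  unfolding cps_def by (auto simp: length_Suc_conv)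

lemma cps_1': "1 \<le> n \<Longrightarrow> cps (Suc 0) n = {[n]}"
  using cps_1 by simp

context ens
begin

lemma GA_Am: "\<forall>k\<in>set ks. 0 < k \<Longrightarrow> GA N Am ks i j = GLr ks i j / prod_list (map fact ks)"
proof (induction ks arbitrary: i j)
  case Nil then show ?case by simp
next
  case (Cons k ks)
  have k: "0 < k" using Cons.prems by simp
  have "GA N Am (k # ks) i j = (\<Sum>c<N. (Gt k i c / fact k) * (GLr ks c j / prod_list (map fact ks)))"
    using Cons k by (simp add: mm_def Am_def Gt_def)
  also have "\<dots> = (\<Sum>c<N. Gt k i c * GLr ks c j) / (fact k * prod_list (map fact ks))"
    by (simp add: sum_divide_distrib)
  finally show ?case by (simp add: mm_def)
qed

definition "tau ks = tr N (GLr ks)"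
definition "phi ks = (prod_list (map fact ks) :: real)"

lemma tr_Am: "fps_nth (tr N (mpow N Am l)) n = (\<Sum>ks\<in>cps l n. tau ks / phi ks)"
proof -
  have "fps_nth (tr N (mpow N Am l)) n = (\<Sum>ks\<in>cps l n. tr N (GA N Am ks))"
    by (rule coeff_tr_mpow[OF Am_low])
  also have "\<dots> = (\<Sum>ks\<in>cps l n. tau ks / phi ks)"
  proof (rule sum.cong[OF refl])
    fix ks assume "ks \<in> cps l n"
    then have p: "\<forall>k\<in>set ks. 0 < k" by (rule cps_pos)
    show "tr N (GA N Am ks) = tau ks / phi ks"
      unfolding tau_def phi_def tr_def using GA_Am[OF p] by (simp add: sum_divide_distrib)
  qed
  finally show ?thesis .
qed

lemma Gamma_tau:
  assumes ns: "ns \<in> Lambda_set n"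
  shows "(\<Sum>\<pi>\<in>Gamma_set n ns N M. \<Prod>i\<in>{1..n}. M (\<pi> ! i) (\<pi> ! (i - 1))) = tau [n] - tau (gaps n ns)"
proof -
  define Bd where "Bd = N + n * wM + 1"
  have L: "ns \<in> Lp n" using ns by (simp add: Lambda_set_def Lp_def)
  have ne: "ns \<noteq> []" using ns by (simp add: Lambda_set_def)
  have n1: "1 \<le> n"
  proof -
    obtain x where "x \<in> set ns" using ne by (cases ns) auto
    then show ?thesis using ns by (auto simp: Lambda_set_def)
  qed
  have C: "gaps n ns \<in> Cp n" by (rule gaps_in_Cp[OF L n1])
  have e1: "(\<Sum>a<N. PSc Bd N MT n {} a a) = tau [n]"
  proof -
    have "PSc Bd N MT (sum_list [n]) (set (ps [n])) a a = GLr [n] a a" if "a < N" for a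
      by (rule SEG[of _ n]) (use n1 that in \<open>auto simp: Bd_def\<close>)
    then show ?thesis unfolding tau_def tr_def by simp
  qed
  have e2: "(\<Sum>a<N. PSc Bd N MT n (set ns) a a) = tau (gaps n ns)"
  proof -
    have sl: "sum_list (gaps n ns) = n" and pos: "\<forall>k\<in>set (gaps n ns). 0 < k" and gne: "gaps n ns \<noteq> []"
      using C by (auto simp: Cp_def)
    have "PSc Bd N MT (sum_list (gaps n ns)) (set (ps (gaps n ns))) a a = GLr (gaps n ns) a a" if "a < N" for a
      by (rule SEG[of _ n]) (use sl pos gne that in \<open>auto simp: Bd_def\<close>)
    then show ?thesis unfolding tau_def tr_def ps_gaps[OF L] sl by simp
  qed
  show ?thesis
    unfolding Gamma_PSc[OF ns Bd_def] sum_subtractf e1 e2 ..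
qed

lemma mho_gaps: "mho n ns = (-1)^(length (gaps n ns)) / real (length (gaps n ns)) * fact n / phi (gaps n ns)"
  unfolding mho_def phi_def by simp

lemma reindex_Lambda:
  assumes n1: "1 \<le> n"
  shows "(\<Sum>ns\<in>Lambda_set n. H (gaps n ns)) = (\<Sum>ks\<in>{ks\<in>Cp n. 2 \<le> length ks}. H ks)"
proof (rule sum.reindex_bij_witness[where i=ps and j="gaps n"])
  fix ns assume ns: "ns \<in> Lambda_set n"
  have L: "ns \<in> Lp n" using ns by (simp add: Lambda_set_def Lp_def)
  show "ps (gaps n ns) = ns" by (rule ps_gaps[OF L])
  have ne: "ns \<noteq> []" using ns by (simp add: Lambda_set_def)
  then have "2 \<le> length (gaps n ns)" by (cases ns) auto
  then show "gaps n ns \<in> {ks\<in>Cp n. 2 \<le> length ks}" using gaps_in_Cp[OF L n1] by simp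
next
  fix ks assume ks: "ks \<in> {ks\<in>Cp n. 2 \<le> length ks}"
  then have C: "ks \<in> Cp n" and l2: "2 \<le> length ks" by auto
  show "gaps n (ps ks) = ks" by (rule gaps_ps[OF C])
  have "ps ks \<in> Lp n" "length (ps ks) + 1 = length ks" using ps_in_Lp[OF C] by auto
  then show "ps ks \<in> Lambda_set n" using l2 by (auto simp: Lp_def Lambda_set_def)
qed simp

lemma C2_union:
  "{ks\<in>Cp n. 2 \<le> length ks} = (\<Union>l\<in>{2..n}. cps l n)"
proof (intro equalityI subsetI)
  fix ks assume "ks \<in> {ks\<in>Cp n. 2 \<le> length ks}"
  then have "ks \<in> Cp n" "2 \<le> length ks" by auto
  moreover then have "length ks \<le> n" using length_le_sum_list by (auto simp: Cp_def)
  ultimately show "ks \<in> (\<Union>l\<in>{2..n}. cps l n)" by (auto simp: Cp_def cps_def)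
next
  fix ks assume "ks \<in> (\<Union>l\<in>{2..n}. cps l n)"
  then show "ks \<in> {ks\<in>Cp n. 2 \<le> length ks}" by (auto simp: Cp_def cps_def)
qed

lemma sum_C2: "(\<Sum>ks\<in>{ks\<in>Cp n. 2 \<le> length ks}. H ks) = (\<Sum>l\<in>{2..n}. \<Sum>ks\<in>cps l n. H ks)"
  unfolding C2_union
  by (rule sum.UNION_disjoint) (use finite_cps in \<open>auto simp: cps_def\<close>)

theorem main_ens:
  assumes n: "n \<ge> 2"
  shows "cumulant S Xs n =
    (\<Sum>ns\<in>Lambda_set n. mho n ns *
       (\<Sum>\<pi>\<in>Gamma_set n ns N M. \<Prod>i\<in>{1..n}. M (\<pi> ! i) (\<pi> ! (i - 1))))"
proof -
  have n1: "1 \<le> n" using n by simp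
  define c where "c = (\<lambda>l::nat. (-1)^(l+1) / real l :: real)"
  define A2 where "A2 = (\<Sum>l\<in>{2..n}. c l * (\<Sum>ks\<in>cps l n. tau ks / phi ks))"
  define B2 where "B2 = (\<Sum>l\<in>{2..n}. c l * (\<Sum>ks\<in>cps l n. 1 / phi ks))"
  have split: "{1..n} = insert 1 {2..n}" using n by auto
  have phin: "phi [n] = fact n" by (simp add: phi_def)
  have fn: "fact n \<noteq> (0::real)" by simp
  have LHS: "cumulant S Xs n = tau [n] + fact n * A2"
  proof -
    have "cumulant S Xs n = fact n * (\<Sum>l\<in>{1..n}. c l * (\<Sum>ks\<in>cps l n. tau ks / phi ks))"
      unfolding cumulant_trace tr_Am c_def ..
    also have "\<dots> = fact n * (c 1 * (tau [n] / phi [n]) + A2)"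
      unfolding split A2_def by (simp add: cps_1'[OF n1])
    finally show ?thesis using phin fn by (simp add: c_def algebra_simps)
  qed
  have B2v: "B2 = - 1 / fact n"
  proof -
    have "(\<Sum>l\<in>{1..n}. c l * (\<Sum>ks\<in>cps l n. 1 / phi ks)) = 0"
      using exp_identity[OF n] unfolding c_def phi_def .
    then have "c 1 * (1 / phi [n]) + B2 = 0"
      unfolding split B2_def by (simp add: cps_1'[OF n1])
    then show ?thesis using phin by (simp add: c_def field_simps)
  qed
  have "(\<Sum>ns\<in>Lambda_set n. mho n ns *
       (\<Sum>\<pi>\<in>Gamma_set n ns N M. \<Prod>i\<in>{1..n}. M (\<pi> ! i) (\<pi> ! (i - 1))))
     = (\<Sum>ns\<in>Lambda_set n. (\<lambda>ks. (-1)^(length ks) / real (length ks) * fact n / phi ks * (tau [n] - tau ks)) (gaps n ns))"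
  proof (rule sum.cong[OF refl])
    fix ns assume ns: "ns \<in> Lambda_set n"
    show "mho n ns * (\<Sum>\<pi>\<in>Gamma_set n ns N M. \<Prod>i\<in>{1..n}. M (\<pi> ! i) (\<pi> ! (i - 1)))
      = (\<lambda>ks. (-1)^(length ks) / real (length ks) * fact n / phi ks * (tau [n] - tau ks)) (gaps n ns)"
      unfolding mho_gaps Gamma_tau[OF ns] by simp
  qed
  also have "\<dots> = (\<Sum>l\<in>{2..n}. \<Sum>ks\<in>cps l n. (-1)^(length ks) / real (length ks) * fact n / phi ks * (tau [n] - tau ks))"
    using reindex_Lambda[OF n1, of "\<lambda>ks. (-1)^(length ks) / real (length ks) * fact n / phi ks * (tau [n] - tau ks)"]
      sum_C2[of "\<lambda>ks. (-1)^(length ks) / real (length ks) * fact n / phi ks * (tau [n] - tau ks)"]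
    by simp
  also have "\<dots> = (\<Sum>l\<in>{2..n}. \<Sum>ks\<in>cps l n. fact n * (c l * (tau ks / phi ks)) - fact n * tau [n] * (c l * (1 / phi ks)))"
  proof (intro sum.cong refl)
    fix l ks assume "l \<in> {2..n}" "ks \<in> cps l n"
    then have "length ks = l" by (simp add: cps_def)
    moreover have "phi ks \<noteq> 0" unfolding phi_def by (induction ks) auto
    moreover have "l \<noteq> 0" using \<open>l \<in> {2..n}\<close> by simp
    ultimately show "(-1)^(length ks) / real (length ks) * fact n / phi ks * (tau [n] - tau ks)
        = fact n * (c l * (tau ks / phi ks)) - fact n * tau [n] * (c l * (1 / phi ks))"
      by (simp add: c_def field_simps)
  qed
  also have "\<dots> = fact n * A2 - fact n * tau [n] * B2"
    unfolding A2_def B2_def by (simp add: sum_subtractf sum_distrib_left)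
  also have "\<dots> = tau [n] + fact n * A2" using fn by (simp add: B2v)
  finally show ?thesis using LHS by simp
qed

end


theorem mainTheorem1:
  fixes S :: "'a measure" and \<xi> :: "'a \<Rightarrow> nat \<Rightarrow> real" and \<mu> :: "real measure"
    and P Q :: "nat \<Rightarrow> real \<Rightarrow> real" and J :: "nat \<Rightarrow> nat \<Rightarrow> real"
    and W N n :: nat and F :: "real poly"
  assumes "prob_space S"
    and "sets \<mu> = sets borel" and "sigma_finite_measure \<mu>"
    and "\<forall>k m. integrable \<mu> (\<lambda>x. P k x * Q m x)
               \<and> (\<integral>x. P k x * Q m x \<partial>\<mu>) = (if k = m then 1 else 0)"
    and "distributed S (PiM {..<N} (\<lambda>_. \<mu>)) \<xi>
           (\<lambda>x. ennreal (det (Matrix.mat N N (\<lambda>(i, j). biorth_kernel P Q N (x i) (x j))) / fact N))"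
    and "W > 0" and "\<forall>i j. int W \<le> \<bar>int i - int j\<bar> \<longrightarrow> J i j = 0"
    and "\<forall>x i. x * P i x = (\<Sum>j<i + W. J i j * P j x)"
    and "n \<ge> 2"
  shows "cumulant S (\<lambda>\<omega>. \<Sum>k<N. poly F (\<xi> \<omega> k)) n =
    (\<Sum>ns\<in>Lambda_set n. mho n ns *
       (\<Sum>\<pi>\<in>Gamma_set n ns N (poly_inf_mat F J).
          \<Prod>i\<in>{1..n}. poly_inf_mat F J (\<pi> ! i) (\<pi> ! (i - 1))))"
proof -
  interpret e: ens S \<xi> \<mu> P Q J W N F
    using assms by (simp add: ens_def)
  show ?thesis using e.main_ens[OF assms(9)] unfolding e.Xs_def e.M_def .
qed

end
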